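(* Let $\mathcal{C}$ be a Fraïssé class with Fraïssé limit $\mathbf{U}$ and let $\mathbf{V},\mathbf{W}\in\overline{\mathcal{C}}$. If $r:\mathbf{U}\twoheadrightarrow\mathbf{V}$ is a universal homogeneous retraction and $s:\mathbf{V}\twoheadrightarrow\mathbf{W}$ is any retraction, then there exists a universal homogeneous retraction $\hat s:\mathbf{U}\twoheadrightarrow\mathbf{W}$.
   Context: An embedding is an injective homomorphism reflecting all relations. An age is a class of finitely generated structures of one signature with countably many isomorphism types, closed under finitely generated substructures (up to isomorphism) and with the joint embedding property; $\overline{\mathcal{C}}$ is the class of countable structures all of whose finitely generated substructures are isomorphic to members of $\mathcal{C}$; a Fraïssé class is an age with the amalgamation property, and its Fraïssé limit is the unique countable homogeneous structure with that age. A homomorphism $r:\mathbf{A}\to\mathbf{B}$ is a retraction if some homomorphism $\iota:\mathbf{B}\to\mathbf{A}$ satisfies $r\circ\iota=1_{\mathbf{B}}$. A universal homogeneous retraction $r:\mathbf{U}\twoheadrightarrow\mathbf{T}$ is a retraction such that (universality) for every $\mathbf{A}\in\overline{\operatorname{Age}(\mathbf{U})}$ and homomorphism $h:\mathbf{A}\to\mathbf{T}$ there is an embedding $\iota:\mathbf{A}\hookrightarrow\mathbf{U}$ with $h=r\circ\iota$, and (homogeneity) for every finitely generated $\mathbf{A}\le\mathbf{U}$ and embedding $\iota:\mathbf{A}\hookrightarrow\mathbf{U}$ with $r\circ\iota=r\restriction_A$ there is an automorphism $\alpha$ of $\mathbf{U}$ with $r\circ\alpha=r$ and $\alpha\restriction_A=\iota$.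 *)

theory Defs
  imports Main "HOL-Library.Countable_Set"
begin

text \<open>A signature is given by the arities of its function symbols (type 'f)
and of its relation symbols (type 'r). Constants are 0-ary function symbols.\<close>

type_synonym ('f,'r) signature = "('f \<Rightarrow> nat) \<times> ('r \<Rightarrow> nat)"

definition farity :: "('f,'r) signature \<Rightarrow> 'f \<Rightarrow> nat" where "farity \<sigma> = fst \<sigma>"
definition rarity :: "('f,'r) signature \<Rightarrow> 'r \<Rightarrow> nat" where "rarity \<sigma> = snd \<sigma>"

record ('a,'f,'r) struct =
  car :: "'a set"
  fun_of :: "'f \<Rightarrow> 'a list \<Rightarrow> 'a"
  rel_of :: "'r \<Rightarrow> 'a list \<Rightarrow> bool"

definition wf_struct :: "('f,'r) signature \<Rightarrow> ('a,'f,'r) struct \<Rightarrow> bool" where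
  "wf_struct \<sigma> A \<longleftrightarrow>
     (\<forall>f xs. length xs = farity \<sigma> f \<and> set xs \<subseteq> car A \<longrightarrow> fun_of A f xs \<in> car A)"

definition hom :: "('f,'r) signature \<Rightarrow> ('a,'f,'r) struct \<Rightarrow> ('b,'f,'r) struct \<Rightarrow> ('a \<Rightarrow> 'b) \<Rightarrow> bool" where
  "hom \<sigma> A B h \<longleftrightarrow>
     (\<forall>x\<in>car A. h x \<in> car B) \<and>
     (\<forall>f xs. length xs = farity \<sigma> f \<and> set xs \<subseteq> car A \<longrightarrow>
        h (fun_of A f xs) = fun_of B f (map h xs)) \<and>
     (\<forall>R xs. length xs = rarity \<sigma> R \<and> set xs \<subseteq> car A \<and> rel_of A R xs \<longrightarrow>
        rel_of B R (map h xs))"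

definition emb :: "('f,'r) signature \<Rightarrow> ('a,'f,'r) struct \<Rightarrow> ('b,'f,'r) struct \<Rightarrow> ('a \<Rightarrow> 'b) \<Rightarrow> bool" where
  "emb \<sigma> A B h \<longleftrightarrow> hom \<sigma> A B h \<and> inj_on h (car A) \<and>
     (\<forall>R xs. length xs = rarity \<sigma> R \<and> set xs \<subseteq> car A \<and> rel_of B R (map h xs) \<longrightarrow>
        rel_of A R xs)"

definition iso :: "('f,'r) signature \<Rightarrow> ('a,'f,'r) struct \<Rightarrow> ('b,'f,'r) struct \<Rightarrow> ('a \<Rightarrow> 'b) \<Rightarrow> bool" where
  "iso \<sigma> A B h \<longleftrightarrow> emb \<sigma> A B h \<and> bij_betw h (car A) (car B)"

definition isomorphic :: "('f,'r) signature \<Rightarrow> ('a,'f,'r) struct \<Rightarrow> ('b,'f,'r) struct \<Rightarrow> bool" where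
  "isomorphic \<sigma> A B \<longleftrightarrow> (\<exists>h. iso \<sigma> A B h)"

definition automorphism :: "('f,'r) signature \<Rightarrow> ('a,'f,'r) struct \<Rightarrow> ('a \<Rightarrow> 'a) \<Rightarrow> bool" where
  "automorphism \<sigma> A h \<longleftrightarrow> iso \<sigma> A A h"

definition substruct :: "('f,'r) signature \<Rightarrow> ('a,'f,'r) struct \<Rightarrow> ('a,'f,'r) struct \<Rightarrow> bool" where
  "substruct \<sigma> A B \<longleftrightarrow> wf_struct \<sigma> A \<and> car A \<subseteq> car B \<and>
     (\<forall>f xs. length xs = farity \<sigma> f \<and> set xs \<subseteq> car A \<longrightarrow> fun_of A f xs = fun_of B f xs) \<and>
     (\<forall>R xs. length xs = rarity \<sigma> R \<and> set xs \<subseteq> car A \<longrightarrow> (rel_of A R xs \<longleftrightarrow> rel_of B R xs))"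

inductive_set generated :: "('f,'r) signature \<Rightarrow> ('a,'f,'r) struct \<Rightarrow> 'a set \<Rightarrow> 'a set"
  for \<sigma> A X where
  gen_base: "x \<in> X \<Longrightarrow> x \<in> generated \<sigma> A X"
| gen_fun: "length xs = farity \<sigma> f \<Longrightarrow> (\<forall>y\<in>set xs. y \<in> generated \<sigma> A X) \<Longrightarrow>
             fun_of A f xs \<in> generated \<sigma> A X"

definition fin_gen :: "('f,'r) signature \<Rightarrow> ('a,'f,'r) struct \<Rightarrow> bool" where
  "fin_gen \<sigma> A \<longleftrightarrow> (\<exists>X. finite X \<and> X \<subseteq> car A \<and> generated \<sigma> A X = car A)"

text \<open>Classes of structures are represented by sets of structures with carrier
in nat (every countable structure has an isomorphic copy of this form); all
class-membership conditions are up to isomorphism.\<close>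

definition Age :: "('f,'r) signature \<Rightarrow> ('u,'f,'r) struct \<Rightarrow> (nat,'f,'r) struct set" where
  "Age \<sigma> U = {A. wf_struct \<sigma> A \<and> fin_gen \<sigma> A \<and>
               (\<exists>B. substruct \<sigma> B U \<and> fin_gen \<sigma> B \<and> isomorphic \<sigma> A B)}"

definition in_cbar :: "('f,'r) signature \<Rightarrow> (nat,'f,'r) struct set \<Rightarrow> ('a,'f,'r) struct \<Rightarrow> bool" where
  "in_cbar \<sigma> C A \<longleftrightarrow> wf_struct \<sigma> A \<and> countable (car A) \<and>
     (\<forall>B. substruct \<sigma> B A \<and> fin_gen \<sigma> B \<longrightarrow> (\<exists>D\<in>C. isomorphic \<sigma> B D))"

definition is_age :: "('f,'r) signature \<Rightarrow> (nat,'f,'r) struct set \<Rightarrow> bool" where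
  "is_age \<sigma> C \<longleftrightarrow>
     (\<forall>A\<in>C. wf_struct \<sigma> A \<and> fin_gen \<sigma> A) \<and>
     (\<exists>g :: nat \<Rightarrow> (nat,'f,'r) struct. \<forall>A\<in>C. \<exists>n. isomorphic \<sigma> A (g n)) \<and>
     (\<forall>A\<in>C. \<forall>B. substruct \<sigma> B A \<and> fin_gen \<sigma> B \<longrightarrow> (\<exists>D\<in>C. isomorphic \<sigma> B D)) \<and>
     (\<forall>A\<in>C. \<forall>B\<in>C. \<exists>D\<in>C. (\<exists>f. emb \<sigma> A D f) \<and> (\<exists>g. emb \<sigma> B D g))"

definition amalgamation :: "('f,'r) signature \<Rightarrow> (nat,'f,'r) struct set \<Rightarrow> bool" where
  "amalgamation \<sigma> C \<longleftrightarrow>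
     (\<forall>A\<in>C. \<forall>B\<in>C. \<forall>B'\<in>C. \<forall>f g. emb \<sigma> A B f \<and> emb \<sigma> A B' g \<longrightarrow>
        (\<exists>D\<in>C. \<exists>f' g'. emb \<sigma> B D f' \<and> emb \<sigma> B' D g' \<and>
           (\<forall>x\<in>car A. f' (f x) = g' (g x))))"

definition fraisse_class :: "('f,'r) signature \<Rightarrow> (nat,'f,'r) struct set \<Rightarrow> bool" where
  "fraisse_class \<sigma> C \<longleftrightarrow> is_age \<sigma> C \<and> amalgamation \<sigma> C"

definition homogeneous :: "('f,'r) signature \<Rightarrow> ('u,'f,'r) struct \<Rightarrow> bool" where
  "homogeneous \<sigma> U \<longleftrightarrow>
     (\<forall>A B f. substruct \<sigma> A U \<and> fin_gen \<sigma> A \<and> substruct \<sigma> B U \<and> fin_gen \<sigma> B \<and>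
        iso \<sigma> A B f \<longrightarrow> (\<exists>\<alpha>. automorphism \<sigma> U \<alpha> \<and> (\<forall>x\<in>car A. \<alpha> x = f x)))"

definition fraisse_limit :: "('f,'r) signature \<Rightarrow> (nat,'f,'r) struct set \<Rightarrow> ('u,'f,'r) struct \<Rightarrow> bool" where
  "fraisse_limit \<sigma> C U \<longleftrightarrow> wf_struct \<sigma> U \<and> countable (car U) \<and> homogeneous \<sigma> U \<and>
     (\<forall>A\<in>C. \<exists>B. substruct \<sigma> B U \<and> fin_gen \<sigma> B \<and> isomorphic \<sigma> A B) \<and>
     (\<forall>B. substruct \<sigma> B U \<and> fin_gen \<sigma> B \<longrightarrow> (\<exists>A\<in>C. isomorphic \<sigma> B A))"

definition retraction :: "('f,'r) signature \<Rightarrow> ('a,'f,'r) struct \<Rightarrow> ('b,'f,'r) struct \<Rightarrow> ('a \<Rightarrow> 'b) \<Rightarrow> bool" where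
  "retraction \<sigma> A B r \<longleftrightarrow> hom \<sigma> A B r \<and>
     (\<exists>\<iota>. hom \<sigma> B A \<iota> \<and> (\<forall>y\<in>car B. r (\<iota> y) = y))"

definition uh_retraction :: "('f,'r) signature \<Rightarrow> ('u,'f,'r) struct \<Rightarrow> ('t,'f,'r) struct \<Rightarrow> ('u \<Rightarrow> 't) \<Rightarrow> bool" where
  "uh_retraction \<sigma> U T r \<longleftrightarrow> retraction \<sigma> U T r \<and>
     (\<forall>A :: (nat,'f,'r) struct. \<forall>h. in_cbar \<sigma> (Age \<sigma> U) A \<and> hom \<sigma> A T h \<longrightarrow>
        (\<exists>\<iota>. emb \<sigma> A U \<iota> \<and> (\<forall>x\<in>car A. h x = r (\<iota> x)))) \<and>
     (\<forall>A \<iota>. substruct \<sigma> A U \<and> fin_gen \<sigma> A \<and> emb \<sigma> A U \<iota> \<and> (\<forall>x\<in>car A. r (\<iota> x) = r x) \<longrightarrow>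
        (\<exists>\<alpha>. automorphism \<sigma> U \<alpha> \<and> (\<forall>x\<in>car U. r (\<alpha> x) = r x) \<and>
             (\<forall>x\<in>car A. \<alpha> x = \<iota> x)))"

end

theory Submission
  imports Defs "HOL-Library.Countable_Set"
begin



abbreviation restr :: "('a,'f,'r) struct \<Rightarrow> 'a set \<Rightarrow> ('a,'f,'r) struct" where
  "restr A Y \<equiv> A\<lparr>car := Y\<rparr>"

lemma generated_cong:
  assumes "fun_of A = fun_of B" shows "generated \<sigma> A X = generated \<sigma> B X"
proof -
  have *: "x \<in> generated \<sigma> A X \<Longrightarrow> x \<in> generated \<sigma> B X" if "fun_of A = fun_of B" for A B and x
  proof (induction rule: generated.induct)
    case (gen_base x) then show ?case by (rule generated.gen_base)
  next
    case (gen_fun xs f) then show ?case using that by (metis generated.gen_fun)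
  qed
  show ?thesis using *[of A B] *[of B A] assms by auto
qed

lemma generated_restr[simp]: "generated \<sigma> (restr A Y) X = generated \<sigma> A X"
  by (rule generated_cong) simp

lemma generated_closed:
  "length xs = farity \<sigma> f \<Longrightarrow> set xs \<subseteq> generated \<sigma> A X \<Longrightarrow> fun_of A f xs \<in> generated \<sigma> A X"
  by (rule generated.gen_fun) auto

lemma generated_base_sub: "X \<subseteq> generated \<sigma> A X"
  by (auto intro: generated.gen_base)

lemma generated_sub:
  assumes "wf_struct \<sigma> A" "X \<subseteq> car A" shows "generated \<sigma> A X \<subseteq> car A"
proof
  fix x assume "x \<in> generated \<sigma> A X" then show "x \<in> car A"
  proof (induction rule: generated.induct)
    case (gen_fun xs f) then have "set xs \<subseteq> car A" by auto
    then show ?case using assms gen_fun(1) unfolding wf_struct_def by blast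
  qed (use assms in auto)
qed

lemma generated_mono:
  assumes "X \<subseteq> Y" shows "generated \<sigma> A X \<subseteq> generated \<sigma> A Y"
proof
  fix x assume "x \<in> generated \<sigma> A X" then show "x \<in> generated \<sigma> A Y"
    by (induction rule: generated.induct) (use assms in \<open>auto intro: generated.intros\<close>)
qed

lemma generated_idem:
  assumes "Y \<subseteq> generated \<sigma> A X" shows "generated \<sigma> A Y \<subseteq> generated \<sigma> A X"
proof
  fix x assume "x \<in> generated \<sigma> A Y" then show "x \<in> generated \<sigma> A X"
    by (induction rule: generated.induct) (use assms in \<open>auto intro: generated.intros\<close>)
qed

lemma wf_restr_gen: "wf_struct \<sigma> (restr A (generated \<sigma> A X))"
  unfolding wf_struct_def by (auto intro: generated_closed)

lemma substruct_restr_gen: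
  assumes "wf_struct \<sigma> A" "X \<subseteq> car A" shows "substruct \<sigma> (restr A (generated \<sigma> A X)) A"
  using assms generated_sub[OF assms] wf_restr_gen[of \<sigma> A X] unfolding substruct_def by auto

lemma fin_gen_restr_gen:
  assumes "finite X" shows "fin_gen \<sigma> (restr A (generated \<sigma> A X))"
  unfolding fin_gen_def using assms generated_base_sub[of X \<sigma> A] by auto

lemma hom_agree_generated:
  assumes "hom \<sigma> A B g" "hom \<sigma> A B g'" "generated \<sigma> A X \<subseteq> car A" "\<forall>x\<in>X. g x = g' x"
  shows "\<forall>x\<in>generated \<sigma> A X. g x = g' x"
proof
  fix x assume "x \<in> generated \<sigma> A X" then show "g x = g' x"
  proof (induction rule: generated.induct)
    case (gen_base x) then show ?case using assms by auto
  next
    case (gen_fun xs f)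
    then have "set xs \<subseteq> car A" using assms(3) by (auto intro: generated.intros)
    then have "g (fun_of A f xs) = fun_of B f (map g xs)" "g' (fun_of A f xs) = fun_of B f (map g' xs)"
      using assms(1,2) gen_fun(1) unfolding hom_def by auto
    moreover have "map g xs = map g' xs" using gen_fun by (auto intro: map_cong)
    ultimately show ?case by simp
  qed
qed

lemma hom_image_generated:
  assumes "hom \<sigma> A B h" "generated \<sigma> A X \<subseteq> car A"
  shows "h ` generated \<sigma> A X = generated \<sigma> B (h ` X)"
proof
  show "h ` generated \<sigma> A X \<subseteq> generated \<sigma> B (h ` X)"
  proof
    fix y assume "y \<in> h ` generated \<sigma> A X"
    then obtain x where x: "x \<in> generated \<sigma> A X" "y = h x" by auto
    have "h x \<in> generated \<sigma> B (h ` X)" using x(1)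
    proof (induction rule: generated.induct)
      case (gen_base x) then show ?case by (auto intro: generated.intros)
    next
      case (gen_fun xs f)
      then have "set xs \<subseteq> car A" using assms(2) by (auto intro: generated.intros)
      then have "h (fun_of A f xs) = fun_of B f (map h xs)" using assms(1) gen_fun(1) unfolding hom_def by auto
      then show ?case using gen_fun by (auto intro!: generated_closed)
    qed
    then show "y \<in> generated \<sigma> B (h ` X)" using x by simp
  qed
next
  show "generated \<sigma> B (h ` X) \<subseteq> h ` generated \<sigma> A X"
  proof
    fix y assume "y \<in> generated \<sigma> B (h ` X)" then show "y \<in> h ` generated \<sigma> A X"
    proof (induction rule: generated.induct)
      case (gen_base x) then show ?case by (auto intro: generated.intros)
    next
      case (gen_fun xs f)
      define ys where "ys = map (inv_into (generated \<sigma> A X) h) xs"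
      have ys: "set ys \<subseteq> generated \<sigma> A X" "map h ys = xs"
        using gen_fun(2) unfolding ys_def by (auto simp: inv_into_into f_inv_into_f intro!: map_idI)
      then have "set ys \<subseteq> car A" using assms(2) by auto
      then have "h (fun_of A f ys) = fun_of B f xs" using assms(1) gen_fun(1) ys(2) unfolding hom_def by auto
      moreover have "fun_of A f ys \<in> generated \<sigma> A X" using ys gen_fun(1) by (auto intro: generated_closed)
      ultimately show ?case by (metis image_eqI)
    qed
  qed
qed

lemma hom_comp: "hom \<sigma> A B h \<Longrightarrow> hom \<sigma> B C k \<Longrightarrow> hom \<sigma> A C (k \<circ> h)"
proof -
  assume a: "hom \<sigma> A B h" and b: "hom \<sigma> B C k"
  show ?thesis unfolding hom_def
  proof (intro conjI allI impI ballI)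
    fix x assume "x \<in> car A" then show "(k \<circ> h) x \<in> car C" using a b unfolding hom_def by auto
  next
    fix f xs assume c: "length xs = farity \<sigma> f \<and> set xs \<subseteq> car A"
    have "set (map h xs) \<subseteq> car B" using a c unfolding hom_def by auto
    moreover have "length (map h xs) = farity \<sigma> f" using c by simp
    ultimately have "k (fun_of B f (map h xs)) = fun_of C f (map k (map h xs))" using b unfolding hom_def by blast
    moreover have "h (fun_of A f xs) = fun_of B f (map h xs)" using a c unfolding hom_def by blast
    ultimately show "(k \<circ> h) (fun_of A f xs) = fun_of C f (map (k \<circ> h) xs)" by simp
  next
    fix R xs assume c: "length xs = rarity \<sigma> R \<and> set xs \<subseteq> car A \<and> rel_of A R xs"
    have "set (map h xs) \<subseteq> car B" using a c unfolding hom_def by auto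
    moreover have "rel_of B R (map h xs)" using a c unfolding hom_def by blast
    moreover have "length (map h xs) = rarity \<sigma> R" using c by simp
    ultimately have "rel_of C R (map k (map h xs))" using b unfolding hom_def by blast
    then show "rel_of C R (map (k \<circ> h) xs)" by simp
  qed
qed

lemma emb_comp: "emb \<sigma> A B h \<Longrightarrow> emb \<sigma> B C k \<Longrightarrow> emb \<sigma> A C (k \<circ> h)"
  unfolding emb_def
proof (intro conjI)
  assume a: "hom \<sigma> A B h \<and> inj_on h (car A) \<and> (\<forall>R xs. length xs = rarity \<sigma> R \<and> set xs \<subseteq> car A \<and> rel_of B R (map h xs) \<longrightarrow> rel_of A R xs)"
     and b: "hom \<sigma> B C k \<and> inj_on k (car B) \<and> (\<forall>R xs. length xs = rarity \<sigma> R \<and> set xs \<subseteq> car B \<and> rel_of C R (map k xs) \<longrightarrow> rel_of B R xs)"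
  show "hom \<sigma> A C (k \<circ> h)" using a b hom_comp by blast
  have "h ` car A \<subseteq> car B" using a unfolding hom_def by auto
  then show "inj_on (k \<circ> h) (car A)" using a b by (meson comp_inj_on inj_on_subset)
  show "\<forall>R xs. length xs = rarity \<sigma> R \<and> set xs \<subseteq> car A \<and> rel_of C R (map (k \<circ> h) xs) \<longrightarrow> rel_of A R xs"
  proof (intro allI impI)
    fix R xs assume c: "length xs = rarity \<sigma> R \<and> set xs \<subseteq> car A \<and> rel_of C R (map (k \<circ> h) xs)"
    have "set (map h xs) \<subseteq> car B" using c a unfolding hom_def by auto
    then have "rel_of B R (map h xs)" using b c by auto
    then show "rel_of A R xs" using a c by auto
  qed
qed

lemma hom_restr_dom: "hom \<sigma> A B h \<Longrightarrow> Y \<subseteq> car A \<Longrightarrow> hom \<sigma> (restr A Y) B h"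
  unfolding hom_def by auto
lemma emb_restr_dom: "emb \<sigma> A B h \<Longrightarrow> Y \<subseteq> car A \<Longrightarrow> emb \<sigma> (restr A Y) B h"
  unfolding emb_def using hom_restr_dom[of \<sigma> A B h Y] by (auto intro: inj_on_subset)
lemma hom_restr_cod: "hom \<sigma> A B h \<Longrightarrow> h ` car A \<subseteq> Y \<Longrightarrow> hom \<sigma> A (restr B Y) h"
  unfolding hom_def by auto
lemma emb_restr_cod: "emb \<sigma> A B h \<Longrightarrow> h ` car A \<subseteq> Y \<Longrightarrow> emb \<sigma> A (restr B Y) h"
  unfolding emb_def using hom_restr_cod[of \<sigma> A B h Y] by auto

lemma hom_substruct_dom: "substruct \<sigma> B A \<Longrightarrow> hom \<sigma> A C h \<Longrightarrow> hom \<sigma> B C h"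
  unfolding hom_def substruct_def by (auto simp: subset_iff)
lemma emb_substruct_dom: "substruct \<sigma> B A \<Longrightarrow> emb \<sigma> A C h \<Longrightarrow> emb \<sigma> B C h"
  unfolding emb_def using hom_substruct_dom[of \<sigma> B A C h]
  by (auto simp: substruct_def subset_iff intro: inj_on_subset) 

lemma emb_hom: "emb \<sigma> A B h \<Longrightarrow> hom \<sigma> A B h" unfolding emb_def by auto
lemma hom_into: "hom \<sigma> A B h \<Longrightarrow> x \<in> car A \<Longrightarrow> h x \<in> car B" unfolding hom_def by auto
lemma hom_image: "hom \<sigma> A B h \<Longrightarrow> h ` car A \<subseteq> car B" unfolding hom_def by auto

lemma substruct_emb_id: "substruct \<sigma> B A \<Longrightarrow> emb \<sigma> B A id"
  unfolding substruct_def emb_def hom_def by auto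

lemma emb_id_restr: "Y \<subseteq> car A \<Longrightarrow> emb \<sigma> (restr A Y) A id"
  unfolding emb_def hom_def by auto

lemma iso_id: "iso \<sigma> A A id"
  unfolding iso_def emb_def hom_def by auto

lemma emb_inv:
  assumes "emb \<sigma> A B h" "wf_struct \<sigma> A"
  shows "emb \<sigma> (restr B (h ` car A)) A (inv_into (car A) h)"
proof -
  have hom: "hom \<sigma> A B h" and inj: "inj_on h (car A)" using assms unfolding emb_def by auto
  let ?g = "inv_into (car A) h"
  have "hom \<sigma> (restr B (h ` car A)) A ?g"
    unfolding hom_def
  proof (intro conjI allI impI ballI)
    fix x assume "x \<in> car (restr B (h ` car A))" then show "?g x \<in> car A" by (auto simp: inv_into_into)
  next
    fix f xs assume a: "length xs = farity \<sigma> f \<and> set xs \<subseteq> car (restr B (h ` car A))"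
    let ?ys = "map ?g xs"
    have ys: "set ?ys \<subseteq> car A" "map h ?ys = xs" using a by (auto simp: inv_into_into f_inv_into_f intro!: map_idI)
    have "h (fun_of A f ?ys) = fun_of B f xs" using hom a ys unfolding hom_def by (metis length_map)
    moreover have "fun_of A f ?ys \<in> car A" using assms(2) ys a unfolding wf_struct_def by auto
    ultimately show "?g (fun_of (restr B (h ` car A)) f xs) = fun_of A f (map ?g xs)"
      using inj by (metis inv_into_f_f struct.select_convs(2) struct.surjective struct.update_convs(1))
  next
    fix R xs assume a: "length xs = rarity \<sigma> R \<and> set xs \<subseteq> car (restr B (h ` car A)) \<and> rel_of (restr B (h ` car A)) R xs"
    let ?ys = "map ?g xs"
    have ys: "set ?ys \<subseteq> car A" "map h ?ys = xs" using a by (auto simp: inv_into_into f_inv_into_f intro!: map_idI)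
    then show "rel_of A R (map ?g xs)" using a assms(1) unfolding emb_def by (metis length_map struct.ext_inject struct.surjective struct.update_convs(1))
  qed
  moreover have "inj_on ?g (h ` car A)" by (rule inj_on_inv_into) simp
  moreover have "\<forall>R xs. length xs = rarity \<sigma> R \<and> set xs \<subseteq> car (restr B (h ` car A)) \<and> rel_of A R (map ?g xs) \<longrightarrow> rel_of (restr B (h ` car A)) R xs"
  proof (intro allI impI)
    fix R xs assume a: "length xs = rarity \<sigma> R \<and> set xs \<subseteq> car (restr B (h ` car A)) \<and> rel_of A R (map ?g xs)"
    let ?ys = "map ?g xs"
    have ys: "set ?ys \<subseteq> car A" "map h ?ys = xs" using a by (auto simp: inv_into_into f_inv_into_f intro!: map_idI)
    have "rel_of B R (map h ?ys)" using hom a ys unfolding hom_def by (metis length_map)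
    then show "rel_of (restr B (h ` car A)) R xs" using ys by simp
  qed
  ultimately show ?thesis unfolding emb_def by simp
qed

lemma emb_iso_image:
  assumes "emb \<sigma> A B h" shows "iso \<sigma> A (restr B (h ` car A)) h"
  using assms emb_restr_cod[OF assms] unfolding iso_def emb_def by (auto simp: inj_on_imp_bij_betw)

lemma iso_emb: "iso \<sigma> A B h \<Longrightarrow> emb \<sigma> A B h" unfolding iso_def by auto




lemma restr_car_self[simp]: "restr A (car A) = A" by simp

lemma nat_copy:
  fixes A :: "('a,'f,'r) struct"
  assumes "wf_struct \<sigma> A" "countable (car A)"
  shows "\<exists>A' :: (nat,'f,'r) struct. \<exists>\<phi> \<psi>. wf_struct \<sigma> A' \<and> countable (car A') \<and>
           emb \<sigma> A A' \<phi> \<and> emb \<sigma> A' A \<psi> \<and> (\<forall>x\<in>car A. \<psi> (\<phi> x) = x)"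
proof -
  define \<phi> where "\<phi> = to_nat_on (car A)"
  define \<psi> where "\<psi> = inv_into (car A) \<phi>"
  have inj: "inj_on \<phi> (car A)" unfolding \<phi>_def using assms(2) by auto
  have psiphi: "\<And>x. x \<in> car A \<Longrightarrow> \<psi> (\<phi> x) = x" unfolding \<psi>_def using inj by simp
  define A' :: "(nat,'f,'r) struct" where
    "A' = \<lparr>car = \<phi> ` car A, fun_of = (\<lambda>f xs. \<phi> (fun_of A f (map \<psi> xs))), rel_of = (\<lambda>R xs. rel_of A R (map \<psi> xs))\<rparr>"
  have mm: "\<And>xs. set xs \<subseteq> car A \<Longrightarrow> map \<psi> (map \<phi> xs) = xs"
    using psiphi by (simp add: map_idI subset_iff)
  have e1: "emb \<sigma> A A' \<phi>"
    unfolding emb_def hom_def A'_def using inj mm by auto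
  have "wf_struct \<sigma> A'"
    unfolding wf_struct_def A'_def
  proof (intro allI impI)
    fix f xs assume a: "length xs = farity \<sigma> f \<and> set xs \<subseteq> car \<lparr>car = \<phi> ` car A, fun_of = (\<lambda>f xs. \<phi> (fun_of A f (map \<psi> xs))), rel_of = (\<lambda>R xs. rel_of A R (map \<psi> xs))\<rparr>"
    then have "set (map \<psi> xs) \<subseteq> car A" unfolding \<psi>_def by (auto simp: inv_into_into)
    then have "fun_of A f (map \<psi> xs) \<in> car A" using assms(1) a unfolding wf_struct_def by auto
    then show "fun_of \<lparr>car = \<phi> ` car A, fun_of = (\<lambda>f xs. \<phi> (fun_of A f (map \<psi> xs))), rel_of = (\<lambda>R xs. rel_of A R (map \<psi> xs))\<rparr> f xs \<in> car \<lparr>car = \<phi> ` car A, fun_of = (\<lambda>f xs. \<phi> (fun_of A f (map \<psi> xs))), rel_of = (\<lambda>R xs. rel_of A R (map \<psi> xs))\<rparr>"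
      by simp
  qed
  moreover have "emb \<sigma> A' A \<psi>"
    using emb_inv[OF e1 assms(1)] unfolding \<psi>_def by (simp add: A'_def)
  moreover have "countable (car A')" unfolding A'_def by simp
  ultimately show ?thesis using e1 psiphi by blast
qed

locale ctx =
  fixes \<sigma> :: "('f,'r) signature"
    and U :: "('u,'f,'r) struct"
    and V :: "('v,'f,'r) struct"
    and W :: "('w,'f,'r) struct"
    and r :: "'u \<Rightarrow> 'v" and s :: "'v \<Rightarrow> 'w" and j :: "'w \<Rightarrow> 'v"
  assumes wfU: "wf_struct \<sigma> U" and cU: "countable (car U)" and homoU: "homogeneous \<sigma> U"
    and wfW: "wf_struct \<sigma> W" and cW: "countable (car W)"
    and r_hom: "hom \<sigma> U V r"
    and r_univ: "\<forall>A :: (nat,'f,'r) struct. \<forall>h. in_cbar \<sigma> (Age \<sigma> U) A \<and> hom \<sigma> A V h \<longrightarrow>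
        (\<exists>\<iota>. emb \<sigma> A U \<iota> \<and> (\<forall>x\<in>car A. h x = r (\<iota> x)))"
    and r_homog: "\<forall>A \<iota>. substruct \<sigma> A U \<and> fin_gen \<sigma> A \<and> emb \<sigma> A U \<iota> \<and> (\<forall>x\<in>car A. r (\<iota> x) = r x) \<longrightarrow>
        (\<exists>\<alpha>. automorphism \<sigma> U \<alpha> \<and> (\<forall>x\<in>car U. r (\<alpha> x) = r x) \<and> (\<forall>x\<in>car A. \<alpha> x = \<iota> x))"
    and s_hom: "hom \<sigma> V W s" and j_hom: "hom \<sigma> W V j" and sj: "\<forall>y\<in>car W. s (j y) = y"
begin

definition locemb :: "('a,'f,'r) struct \<Rightarrow> bool" where
  "locemb A \<longleftrightarrow> (\<forall>B. substruct \<sigma> B A \<and> fin_gen \<sigma> B \<longrightarrow> (\<exists>\<phi>. emb \<sigma> B U \<phi>))"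

lemma image_fin_gen:
  assumes "fin_gen \<sigma> B" "wf_struct \<sigma> B" "hom \<sigma> B A \<phi>" "wf_struct \<sigma> A"
  shows "\<exists>X. finite X \<and> X \<subseteq> car A \<and> \<phi> ` car B = generated \<sigma> A X"
proof -
  obtain X where X: "finite X" "X \<subseteq> car B" "generated \<sigma> B X = car B" using assms(1) unfolding fin_gen_def by auto
  have "\<phi> ` car B = generated \<sigma> A (\<phi> ` X)" using hom_image_generated[OF assms(3)] X(3) by (metis order_refl)
  moreover have "\<phi> ` X \<subseteq> car A" using X(2) assms(3) unfolding hom_def by auto
  ultimately show ?thesis using X(1) by blast
qed

lemma emb_Age:
  fixes B :: "(nat,'f,'r) struct"
  assumes "wf_struct \<sigma> B" "fin_gen \<sigma> B" "emb \<sigma> B U \<phi>"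
  shows "B \<in> Age \<sigma> U"
proof -
  obtain X where X: "finite X" "X \<subseteq> car U" "\<phi> ` car B = generated \<sigma> U X"
    using image_fin_gen[OF assms(2,1) emb_hom[OF assms(3)] wfU] by auto
  have "substruct \<sigma> (restr U (generated \<sigma> U X)) U" using substruct_restr_gen[OF wfU X(2)] .
  moreover have "fin_gen \<sigma> (restr U (generated \<sigma> U X))" using fin_gen_restr_gen[OF X(1)] .
  moreover have "isomorphic \<sigma> B (restr U (generated \<sigma> U X))"
    using emb_iso_image[OF assms(3)] X(3) unfolding isomorphic_def by metis
  ultimately show ?thesis unfolding Age_def using assms by blast
qed

lemma locemb_restr_U: "Y \<subseteq> car U \<Longrightarrow> locemb (restr U Y)"
  unfolding locemb_def using substruct_emb_id emb_id_restr emb_comp by metis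

lemma locemb_emb:
  assumes "emb \<sigma> A' A \<psi>" "wf_struct \<sigma> A" "locemb A"
  shows "locemb A'"
  unfolding locemb_def
proof (intro allI impI)
  fix B' assume B': "substruct \<sigma> B' A' \<and> fin_gen \<sigma> B'"
  have e: "emb \<sigma> B' A \<psi>" using emb_substruct_dom B' assms(1) by blast
  have wfB': "wf_struct \<sigma> B'" using B' unfolding substruct_def by auto
  obtain X where X: "finite X" "X \<subseteq> car A" "\<psi> ` car B' = generated \<sigma> A X"
    using image_fin_gen[OF conjunct2[OF B'] wfB' emb_hom[OF e] assms(2)] by auto
  obtain \<phi> where \<phi>: "emb \<sigma> (restr A (generated \<sigma> A X)) U \<phi>"
    using assms(3) substruct_restr_gen[OF assms(2) X(2)] fin_gen_restr_gen[OF X(1)] unfolding locemb_def by blast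
  have "emb \<sigma> B' (restr A (generated \<sigma> A X)) \<psi>" using emb_restr_cod[OF e] X(3) by simp
  then show "\<exists>\<phi>. emb \<sigma> B' U \<phi>" using emb_comp \<phi> by blast
qed

lemma in_cbar_Age:
  fixes A :: "(nat,'f,'r) struct"
  assumes "wf_struct \<sigma> A" "countable (car A)" "locemb A"
  shows "in_cbar \<sigma> (Age \<sigma> U) A"
  unfolding in_cbar_def
proof (intro conjI assms allI impI)
  fix B assume B: "substruct \<sigma> B A \<and> fin_gen \<sigma> B"
  then obtain \<phi> where "emb \<sigma> B U \<phi>" using assms(3) unfolding locemb_def by blast
  then have "B \<in> Age \<sigma> U" using emb_Age B unfolding substruct_def by blast
  moreover have "isomorphic \<sigma> B B" using iso_id unfolding isomorphic_def by blast
  ultimately show "\<exists>D\<in>Age \<sigma> U. isomorphic \<sigma> B D" by blast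
qed

lemma GU:
  fixes A :: "('a,'f,'r) struct"
  assumes "wf_struct \<sigma> A" "countable (car A)" "locemb A" "hom \<sigma> A V h"
  shows "\<exists>\<iota>. emb \<sigma> A U \<iota> \<and> (\<forall>x\<in>car A. r (\<iota> x) = h x)"
proof -
  obtain A' :: "(nat,'f,'r) struct" and \<phi> \<psi> where
    A': "wf_struct \<sigma> A'" "countable (car A')" "emb \<sigma> A A' \<phi>" "emb \<sigma> A' A \<psi>" "\<forall>x\<in>car A. \<psi> (\<phi> x) = x"
    using nat_copy[OF assms(1,2)] by blast
  have "in_cbar \<sigma> (Age \<sigma> U) A'" using in_cbar_Age A' locemb_emb assms by blast
  moreover have "hom \<sigma> A' V (h \<circ> \<psi>)" using hom_comp emb_hom A'(4) assms(4) by blast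
  ultimately obtain \<iota> where \<iota>: "emb \<sigma> A' U \<iota>" "\<forall>x\<in>car A'. (h \<circ> \<psi>) x = r (\<iota> x)" using r_univ by blast
  have "emb \<sigma> A U (\<iota> \<circ> \<phi>)" using emb_comp A'(3) \<iota>(1) by blast
  moreover have "\<forall>x\<in>car A. r ((\<iota> \<circ> \<phi>) x) = h x"
    using \<iota>(2) A'(5) hom_into[OF emb_hom[OF A'(3)]] by (metis comp_apply)
  ultimately show ?thesis by blast
qed

end



lemma restr_restr[simp]: "restr (restr A Y) Z = restr A Z" by simp

lemma aut_emb: "automorphism \<sigma> U \<alpha> \<Longrightarrow> emb \<sigma> U U \<alpha>"
  unfolding automorphism_def iso_def by auto

lemma aut_inv:
  assumes "automorphism \<sigma> U \<beta>" "wf_struct \<sigma> U"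
  shows "emb \<sigma> U U (inv_into (car U) \<beta>)" "\<And>x. x \<in> car U \<Longrightarrow> inv_into (car U) \<beta> (\<beta> x) = x"
proof -
  have b: "bij_betw \<beta> (car U) (car U)" using assms unfolding automorphism_def iso_def by auto
  then have "\<beta> ` car U = car U" by (simp add: bij_betw_def)
  then show "emb \<sigma> U U (inv_into (car U) \<beta>)" using emb_inv[OF aut_emb[OF assms(1)] assms(2)] by simp
  show "\<And>x. x \<in> car U \<Longrightarrow> inv_into (car U) \<beta> (\<beta> x) = x" using b by (simp add: bij_betw_def)
qed

context ctx begin

lemma STEP:
  assumes X: "finite X" "X \<subseteq> car U" and tau: "hom \<sigma> U W \<tau>"
    and Ya: "finite Ya" "Ya \<subseteq> car U" "generated \<sigma> U Ya \<subseteq> generated \<sigma> U X"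
    and Zb: "Zb \<subseteq> car U"
    and g: "emb \<sigma> (restr U (generated \<sigma> U Ya)) (restr U (generated \<sigma> U Zb)) g"
    and h: "hom \<sigma> (restr U (generated \<sigma> U Zb)) W h"
    and compat: "\<forall>a\<in>generated \<sigma> U Ya. h (g a) = \<tau> a"
  shows "\<exists>\<tau>' f. hom \<sigma> U W \<tau>' \<and> (\<forall>x\<in>generated \<sigma> U X. \<tau>' x = \<tau> x) \<and>
     emb \<sigma> (restr U (generated \<sigma> U Zb)) U f \<and> (\<forall>a\<in>generated \<sigma> U Ya. f (g a) = a) \<and>
     (\<forall>b\<in>generated \<sigma> U Zb. \<tau>' (f b) = h b)"
proof -
  define S where "S = generated \<sigma> U X"
  define A where "A = generated \<sigma> U Ya"
  define B where "B = generated \<sigma> U Zb"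
  have SU: "S \<subseteq> car U" unfolding S_def using generated_sub[OF wfU X(2)] .
  have BU: "B \<subseteq> car U" unfolding B_def using generated_sub[OF wfU Zb] .
  have AS: "A \<subseteq> S" unfolding A_def S_def using Ya(3) .
  have wfS: "wf_struct \<sigma> (restr U S)" and wfB: "wf_struct \<sigma> (restr U B)" and wfA: "wf_struct \<sigma> (restr U A)"
    unfolding S_def B_def A_def by (rule wf_restr_gen)+
  have "hom \<sigma> (restr U S) V (j \<circ> \<tau>)" using hom_restr_dom[OF hom_comp[OF tau j_hom] SU] .
  moreover have "countable (car (restr U S))" using countable_subset[OF SU cU] by simp
  ultimately have "\<exists>\<iota>. emb \<sigma> (restr U S) U \<iota> \<and> (\<forall>x\<in>car (restr U S). r (\<iota> x) = (j \<circ> \<tau>) x)"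
    using GU[OF wfS _ locemb_restr_U[OF SU]] by blast
  then
  obtain e1 where e1: "emb \<sigma> (restr U S) U e1" "\<forall>x\<in>S. r (e1 x) = j (\<tau> x)" by auto
  have "hom \<sigma> (restr U B) V (j \<circ> h)" using hom_comp[OF h[folded B_def] j_hom] .
  moreover have "countable (car (restr U B))" using countable_subset[OF BU cU] by simp
  ultimately have "\<exists>\<iota>. emb \<sigma> (restr U B) U \<iota> \<and> (\<forall>x\<in>car (restr U B). r (\<iota> x) = (j \<circ> h) x)"
    using GU[OF wfB _ locemb_restr_U[OF BU]] by blast
  then
  obtain e2 where e2: "emb \<sigma> (restr U B) U e2" "\<forall>x\<in>B. r (e2 x) = j (h x)" by auto
  have eg: "emb \<sigma> (restr U A) U (e2 \<circ> g)" using emb_comp[OF g[folded A_def B_def] e2(1)] .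
  have injeg: "inj_on (e2 \<circ> g) A" using eg unfolding emb_def by simp
  have fA: "fin_gen \<sigma> (restr U A)" unfolding A_def by (rule fin_gen_restr_gen[OF Ya(1)])
  from image_fin_gen[OF fA wfA emb_hom[OF eg] wfU]
  obtain X2 where X2: "finite X2" "X2 \<subseteq> car U" "(e2 \<circ> g) ` A = generated \<sigma> U X2" by auto
  define k where "k = e1 \<circ> inv_into A (e2 \<circ> g)"
  have "emb \<sigma> (restr U ((e2 \<circ> g) ` A)) (restr U A) (inv_into A (e2 \<circ> g))"
    using emb_inv[OF eg wfA] by simp
  moreover have "emb \<sigma> (restr U A) U e1" using emb_restr_dom[OF e1(1), of A] AS by simp
  ultimately have k: "emb \<sigma> (restr U (generated \<sigma> U X2)) U k" unfolding k_def using emb_comp X2(3) by metis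
  have gB: "\<And>a. a \<in> A \<Longrightarrow> g a \<in> B" using hom_into[OF emb_hom[OF g]] unfolding A_def B_def by simp
  have kval: "\<And>a. a \<in> A \<Longrightarrow> k (e2 (g a)) = e1 a"
    unfolding k_def using injeg by (metis comp_apply inv_into_f_f)
  have "\<forall>x\<in>car (restr U (generated \<sigma> U X2)). r (k x) = r x"
  proof
    fix x assume "x \<in> car (restr U (generated \<sigma> U X2))"
    then obtain a where a: "a \<in> A" "x = e2 (g a)" using X2(3) by auto
    have "r (k x) = j (\<tau> a)" using kval a e1(2) AS by auto
    also have "\<dots> = j (h (g a))" using compat a unfolding A_def by simp
    also have "\<dots> = r x" using e2(2) gB a by simp
    finally show "r (k x) = r x" .
  qed
  then have "\<exists>\<alpha>. automorphism \<sigma> U \<alpha> \<and> (\<forall>x\<in>car U. r (\<alpha> x) = r x) \<and> (\<forall>x\<in>car (restr U (generated \<sigma> U X2)). \<alpha> x = k x)"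
    using r_homog substruct_restr_gen[OF wfU X2(2)] fin_gen_restr_gen[OF X2(1)] k by blast
  then obtain \<alpha> where \<alpha>: "automorphism \<sigma> U \<alpha>" "\<forall>x\<in>car U. r (\<alpha> x) = r x" "\<forall>x\<in>generated \<sigma> U X2. \<alpha> x = k x"
    by auto
  define e2' where "e2' = \<alpha> \<circ> e2"
  have e2'e: "emb \<sigma> (restr U B) U e2'" unfolding e2'_def using emb_comp[OF e2(1) aut_emb[OF \<alpha>(1)]] .
  have e2'r: "\<And>b. b \<in> B \<Longrightarrow> r (e2' b) = j (h b)"
    unfolding e2'_def using \<alpha>(2) e2(2) hom_into[OF emb_hom[OF e2(1)]] by simp
  have e2'g: "\<And>a. a \<in> A \<Longrightarrow> e2' (g a) = e1 a"
  proof -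
    fix a assume a: "a \<in> A"
    have "e2 (g a) \<in> generated \<sigma> U X2" using X2(3) a by (metis comp_apply image_eqI)
    then show "e2' (g a) = e1 a" unfolding e2'_def using \<alpha>(3) kval a by simp
  qed
  have fS: "fin_gen \<sigma> (restr U S)" unfolding S_def by (rule fin_gen_restr_gen[OF X(1)])
  from image_fin_gen[OF fS wfS emb_hom[OF e1(1)] wfU]
  obtain X3 where X3: "finite X3" "X3 \<subseteq> car U" "e1 ` S = generated \<sigma> U X3" by auto
  have inj1: "inj_on e1 S" using e1(1) unfolding emb_def by simp
  have "emb \<sigma> (restr U (e1 ` S)) (restr U S) (inv_into S e1)" using emb_inv[OF e1(1) wfS] by simp
  moreover have "bij_betw (inv_into S e1) (e1 ` S) S" by (rule bij_betw_inv_into) (use inj1 in \<open>simp add: inj_on_imp_bij_betw\<close>)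
  ultimately have "iso \<sigma> (restr U (generated \<sigma> U X3)) (restr U S) (inv_into S e1)" unfolding iso_def using X3(3) by simp
  then have "\<exists>\<beta>. automorphism \<sigma> U \<beta> \<and> (\<forall>x\<in>car (restr U (generated \<sigma> U X3)). \<beta> x = inv_into S e1 x)"
    using homoU substruct_restr_gen[OF wfU X3(2)] fin_gen_restr_gen[OF X3(1)]
      substruct_restr_gen[OF wfU X(2)] fin_gen_restr_gen[OF X(1)] unfolding homogeneous_def S_def by blast
  then obtain \<beta> where \<beta>: "automorphism \<sigma> U \<beta>" "\<forall>x\<in>generated \<sigma> U X3. \<beta> x = inv_into S e1 x"
    by auto
  have \<beta>e1: "\<And>a. a \<in> S \<Longrightarrow> \<beta> (e1 a) = a" using \<beta>(2) X3(3) inj1 by (metis image_eqI inv_into_f_f)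
  define f where "f = \<beta> \<circ> e2'"
  define \<beta>i where "\<beta>i = inv_into (car U) \<beta>"
  define \<tau>' where "\<tau>' = s \<circ> (r \<circ> \<beta>i)"
  have fe: "emb \<sigma> (restr U B) U f" unfolding f_def using emb_comp[OF e2'e aut_emb[OF \<beta>(1)]] .
  have hom': "hom \<sigma> U W \<tau>'" unfolding \<tau>'_def \<beta>i_def
    using hom_comp[OF hom_comp[OF emb_hom[OF aut_inv(1)[OF \<beta>(1) wfU]] r_hom] s_hom] .
  have fg: "\<forall>a\<in>A. f (g a) = a" unfolding f_def using e2'g \<beta>e1 AS by auto
  have e1U: "\<And>x. x \<in> S \<Longrightarrow> e1 x \<in> car U" using hom_into[OF emb_hom[OF e1(1)]] by simp
  have tS: "\<forall>x\<in>S. \<tau>' x = \<tau> x"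
  proof
    fix x assume x: "x \<in> S"
    have "\<beta>i x = e1 x" unfolding \<beta>i_def using aut_inv(2)[OF \<beta>(1) wfU e1U[OF x]] \<beta>e1[OF x] by simp
    then show "\<tau>' x = \<tau> x" unfolding \<tau>'_def using e1(2) x sj hom_into[OF tau] SU by auto
  qed
  have tB: "\<forall>b\<in>B. \<tau>' (f b) = h b"
  proof
    fix b assume b: "b \<in> B"
    have "e2' b \<in> car U" using hom_into[OF emb_hom[OF e2'e]] b by simp
    then have "\<beta>i (f b) = e2' b" unfolding \<beta>i_def f_def using aut_inv(2)[OF \<beta>(1) wfU] by simp
    then show "\<tau>' (f b) = h b" unfolding \<tau>'_def using e2'r[OF b] sj hom_into[OF h] b unfolding B_def by simp
  qed
  show ?thesis using hom' tS fe fg tB unfolding S_def A_def B_def by blast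
qed

end



context ctx begin

definition TT :: "('u list \<times> 'u list \<times> 'w list) set" where
  "TT = lists (car U) \<times> lists (car U) \<times> lists (car W)"

definition task :: "nat \<Rightarrow> 'u list \<times> 'u list \<times> 'w list" where
  "task n = from_nat_into TT (fst (prod_decode n))"

definition validt :: "'u list \<times> 'u list \<times> 'w list \<Rightarrow> ('u \<Rightarrow> 'u) \<Rightarrow> ('u \<Rightarrow> 'w) \<Rightarrow> bool" where
  "validt t g h \<longleftrightarrow> emb \<sigma> (restr U (generated \<sigma> U (set (fst t)))) (restr U (generated \<sigma> U (set (fst (snd t))))) g \<and>
     (\<forall>i<length (fst t). g (fst t ! i) = fst (snd t) ! i) \<and>
     hom \<sigma> (restr U (generated \<sigma> U (set (fst (snd t))))) W h \<and>
     (\<forall>i<length (fst (snd t)). h (fst (snd t) ! i) = snd (snd t) ! i)"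

definition Pq :: "'u set \<Rightarrow> ('u \<Rightarrow> 'w) \<Rightarrow> 'u list \<times> 'u list \<times> 'w list \<Rightarrow> ('u \<Rightarrow> 'w) \<times> ('u \<Rightarrow> 'u) \<Rightarrow> bool" where
  "Pq X \<tau> t q \<longleftrightarrow> (\<exists>g h. validt t g h \<and> set (fst t) \<subseteq> generated \<sigma> U X \<and>
     (\<forall>a\<in>generated \<sigma> U (set (fst t)). h (g a) = \<tau> a) \<and>
     hom \<sigma> U W (fst q) \<and> (\<forall>x\<in>generated \<sigma> U X. fst q x = \<tau> x) \<and>
     emb \<sigma> (restr U (generated \<sigma> U (set (fst (snd t))))) U (snd q) \<and>
     (\<forall>a\<in>generated \<sigma> U (set (fst t)). snd q (g a) = a) \<and>
     (\<forall>b\<in>generated \<sigma> U (set (fst (snd t))). fst q (snd q b) = h b))"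

definition U0 :: "nat \<Rightarrow> 'u set" where "U0 n = {from_nat_into (car U) n} \<inter> car U"

definition stp :: "nat \<Rightarrow> 'u set \<times> ('u \<Rightarrow> 'w) \<Rightarrow> 'u set \<times> ('u \<Rightarrow> 'w)" where
  "stp n st = (if (\<exists>q. Pq (fst st) (snd st) (task n) q)
      then (let q = (SOME q. Pq (fst st) (snd st) (task n) q) in
            (fst st \<union> snd q ` set (fst (snd (task n))) \<union> U0 n, fst q))
      else (fst st \<union> U0 n, snd st))"

fun seqS :: "nat \<Rightarrow> 'u set \<times> ('u \<Rightarrow> 'w)" where
  "seqS 0 = ({}, s \<circ> r)"
| "seqS (Suc n) = stp n (seqS n)"

definition Xs where "Xs n = fst (seqS n)"
definition ts where "ts n = snd (seqS n)"

lemma TT_nil: "([],[],[]) \<in> TT" unfolding TT_def by simp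
lemma TT_ne: "TT \<noteq> {}" using TT_nil by blast
lemma TT_countable: "countable TT" unfolding TT_def using cU cW by (intro countable_SIGMA countable_lists)
lemma task_TT: "task n \<in> TT" unfolding task_def by (rule from_nat_into[OF TT_ne])

lemma task_often: "t \<in> TT \<Longrightarrow> \<exists>n\<ge>m. task n = t"
proof -
  assume "t \<in> TT"
  from from_nat_into_surj[OF TT_countable this]
  obtain k where k: "from_nat_into TT k = t" by (elim exE)
  have "fst (prod_decode (prod_encode (k, m))) = k" by (simp only: prod_encode_inverse fst_conv)
  then have "task (prod_encode (k, m)) = t" unfolding task_def using k by (simp only:)
  then show ?thesis using le_prod_encode_2 by blast
qed

lemma stp_unfold: "stp n st = (if (\<exists>q. Pq (fst st) (snd st) (task n) q)
      then (fst st \<union> snd (SOME q. Pq (fst st) (snd st) (task n) q) ` set (fst (snd (task n))) \<union> U0 n, fst (SOME q. Pq (fst st) (snd st) (task n) q))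
      else (fst st \<union> U0 n, snd st))"
  unfolding stp_def Let_def by (rule refl)

lemma step_cases:
  "(\<exists>q. Pq (Xs n) (ts n) (task n) q \<and> Xs (Suc n) = Xs n \<union> snd q ` set (fst (snd (task n))) \<union> U0 n \<and> ts (Suc n) = fst q)
   \<or> (\<not>(\<exists>q. Pq (Xs n) (ts n) (task n) q) \<and> Xs (Suc n) = Xs n \<union> U0 n \<and> ts (Suc n) = ts n)"
proof (cases "\<exists>q. Pq (Xs n) (ts n) (task n) q")
  case True
  define q where "q = (SOME q. Pq (Xs n) (ts n) (task n) q)"
  have P: "Pq (Xs n) (ts n) (task n) q" unfolding q_def using True by (rule someI_ex)
  have T': "\<exists>q. Pq (fst (seqS n)) (snd (seqS n)) (task n) q" using True unfolding Xs_def ts_def .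
  have "seqS (Suc n) = (Xs n \<union> snd q ` set (fst (snd (task n))) \<union> U0 n, fst q)"
    unfolding seqS.simps(2) stp_unfold if_P[OF T'] q_def Xs_def ts_def by (rule refl)
  then have "Xs (Suc n) = Xs n \<union> snd q ` set (fst (snd (task n))) \<union> U0 n" "ts (Suc n) = fst q"
    unfolding Xs_def[of "Suc n"] ts_def[of "Suc n"] by simp_all
  then show ?thesis using P True by blast
next
  case False
  have F': "\<not>(\<exists>q. Pq (fst (seqS n)) (snd (seqS n)) (task n) q)" using False unfolding Xs_def ts_def .
  have "seqS (Suc n) = (Xs n \<union> U0 n, ts n)"
    unfolding seqS.simps(2) stp_unfold if_not_P[OF F'] Xs_def ts_def by (rule refl)
  then have "Xs (Suc n) = Xs n \<union> U0 n" "ts (Suc n) = ts n"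
    unfolding Xs_def[of "Suc n"] ts_def[of "Suc n"] by simp_all
  then show ?thesis using False by blast
qed

lemma PqE:
  assumes "Pq X \<tau> t q"
  obtains g h where "validt t g h" "set (fst t) \<subseteq> generated \<sigma> U X"
     "\<forall>a\<in>generated \<sigma> U (set (fst t)). h (g a) = \<tau> a"
     "hom \<sigma> U W (fst q)" "\<forall>x\<in>generated \<sigma> U X. fst q x = \<tau> x"
     "emb \<sigma> (restr U (generated \<sigma> U (set (fst (snd t))))) U (snd q)"
     "\<forall>a\<in>generated \<sigma> U (set (fst t)). snd q (g a) = a"
     "\<forall>b\<in>generated \<sigma> U (set (fst (snd t))). fst q (snd q b) = h b"
  using assms unfolding Pq_def by (elim exE conjE) (rule that)

lemma inv: "finite (Xs n) \<and> Xs n \<subseteq> car U \<and> hom \<sigma> U W (ts n)"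
proof (induction n)
  case 0
  have X0: "Xs 0 = {}" unfolding Xs_def by simp
  have T0: "ts 0 = s \<circ> r" unfolding ts_def by simp
  have "hom \<sigma> U W (ts 0)" unfolding T0 by (rule hom_comp[OF r_hom s_hom])
  then show ?case unfolding X0 by simp
next
  case (Suc n)
  have IH1: "finite (Xs n)" and IH2: "Xs n \<subseteq> car U" and IH3: "hom \<sigma> U W (ts n)" using Suc by blast+
  have U01: "finite (U0 n)" unfolding U0_def by simp
  have U02: "U0 n \<subseteq> car U" unfolding U0_def by (rule Int_lower2)
  from step_cases[of n] show ?case
  proof (elim disjE exE conjE)
    fix q assume q1: "Pq (Xs n) (ts n) (task n) q"
      and q2: "Xs (Suc n) = Xs n \<union> snd q ` set (fst (snd (task n))) \<union> U0 n" and q3: "ts (Suc n) = fst q"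
    have f1: "emb \<sigma> (restr U (generated \<sigma> U (set (fst (snd (task n)))))) U (snd q)"
      using q1 by (elim PqE)
    have f2: "hom \<sigma> U W (fst q)" using q1 by (elim PqE)
    have img: "snd q ` set (fst (snd (task n))) \<subseteq> car U"
    proof
      fix y assume "y \<in> snd q ` set (fst (snd (task n)))"
      then obtain z where z: "z \<in> set (fst (snd (task n)))" "y = snd q z" by blast
      have "z \<in> car (restr U (generated \<sigma> U (set (fst (snd (task n))))))"
        by (simp add: generated.gen_base z(1))
      then show "y \<in> car U" using hom_into[OF emb_hom[OF f1]] z(2) by blast
    qed
    have "finite (Xs (Suc n))" unfolding q2 using IH1 U01 by simp
    moreover have "Xs (Suc n) \<subseteq> car U" unfolding q2 using IH2 img U02 by (intro Un_least)
    moreover have "hom \<sigma> U W (ts (Suc n))" unfolding q3 by (rule f2)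
    ultimately show ?case by (intro conjI)
  next
    assume q2: "Xs (Suc n) = Xs n \<union> U0 n" and q3: "ts (Suc n) = ts n"
    have "finite (Xs (Suc n))" unfolding q2 using IH1 U01 by simp
    moreover have "Xs (Suc n) \<subseteq> car U" unfolding q2 using IH2 U02 by (intro Un_least)
    moreover have "hom \<sigma> U W (ts (Suc n))" unfolding q3 by (rule IH3)
    ultimately show ?case by (intro conjI)
  qed
qed

lemma step_agree: "\<forall>x\<in>generated \<sigma> U (Xs n). ts (Suc n) x = ts n x"
  using step_cases[of n]
proof (elim disjE exE conjE)
  fix q assume "Pq (Xs n) (ts n) (task n) q" "ts (Suc n) = fst q"
  then show ?thesis by (elim PqE) simp
qed simp

lemma step_mono: "Xs n \<subseteq> Xs (Suc n)"
  using step_cases[of n] by auto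

lemma Xs_mono: "m \<le> n \<Longrightarrow> Xs m \<subseteq> Xs n"
proof (induction n rule: dec_induct)
  case base then show ?case by (rule order_refl)
next
  case (step n) show ?case by (rule order_trans[OF step(3) step_mono])
qed

lemma gen_mono: "m \<le> n \<Longrightarrow> generated \<sigma> U (Xs m) \<subseteq> generated \<sigma> U (Xs n)"
  by (rule generated_mono[OF Xs_mono])

lemma ts_agree: "m \<le> n \<Longrightarrow> \<forall>x\<in>generated \<sigma> U (Xs m). ts n x = ts m x"
proof (induction n rule: dec_induct)
  case base then show ?case by simp
next
  case (step n)
  show ?case
  proof
    fix x assume x: "x \<in> generated \<sigma> U (Xs m)"
    then have "x \<in> generated \<sigma> U (Xs n)" using gen_mono[OF step(1)] by blast
    then have "ts (Suc n) x = ts n x" using step_agree[of n] by blast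
    then show "ts (Suc n) x = ts m x" using step(3) x by simp
  qed
qed

lemma U0_sub: "U0 n \<subseteq> Xs (Suc n)"
  using step_cases[of n]
proof (elim disjE exE conjE)
  fix q assume "Xs (Suc n) = Xs n \<union> snd q ` set (fst (snd (task n))) \<union> U0 n"
  then show ?thesis by (simp only:) (rule Un_upper2)
next
  assume "Xs (Suc n) = Xs n \<union> U0 n"
  then show ?thesis by (simp only:) (rule Un_upper2)
qed

lemma U0_in: "u \<in> car U \<Longrightarrow> \<exists>n. u \<in> Xs (Suc n)"
proof -
  assume u: "u \<in> car U"
  from from_nat_into_surj[OF cU u] obtain n where n: "from_nat_into (car U) n = u" by (elim exE)
  then have "u \<in> U0 n" unfolding U0_def using u by blast
  then show ?thesis using U0_sub[of n] by blast
qed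

lemma finite_in_stage: "finite F \<Longrightarrow> F \<subseteq> car U \<Longrightarrow> \<exists>n. F \<subseteq> generated \<sigma> U (Xs n)"
proof (induction F rule: finite_induct)
  case empty then show ?case by blast
next
  case (insert u F)
  have "F \<subseteq> car U" using insert.prems by blast
  from insert.IH[OF this] obtain n where n: "F \<subseteq> generated \<sigma> U (Xs n)" by (elim exE)
  have "u \<in> car U" using insert.prems by blast
  from U0_in[OF this] obtain m where m: "u \<in> Xs (Suc m)" by (elim exE)
  have "F \<subseteq> generated \<sigma> U (Xs (max n (Suc m)))" using n gen_mono[of n "max n (Suc m)"] by simp
  moreover have "Xs (Suc m) \<subseteq> generated \<sigma> U (Xs (max n (Suc m)))"
    using Xs_mono[of "Suc m" "max n (Suc m)"] generated_base_sub[of "Xs (max n (Suc m))" \<sigma> U] by simp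
  ultimately have "insert u F \<subseteq> generated \<sigma> U (Xs (max n (Suc m)))" using m by blast
  then show ?case by blast
qed

definition shat :: "'u \<Rightarrow> 'w" where
  "shat x = ts (LEAST n. x \<in> generated \<sigma> U (Xs n)) x"

lemma shat_eq: "x \<in> generated \<sigma> U (Xs n) \<Longrightarrow> shat x = ts n x"
proof -
  assume x: "x \<in> generated \<sigma> U (Xs n)"
  define m where "m = (LEAST n. x \<in> generated \<sigma> U (Xs n))"
  have "x \<in> generated \<sigma> U (Xs m)" "m \<le> n" unfolding m_def using x by (auto intro: LeastI Least_le)
  then have "ts n x = ts m x" using ts_agree by blast
  then show ?thesis unfolding shat_def m_def[symmetric] by simp
qed

lemma shat_hom: "hom \<sigma> U W shat"
  unfolding hom_def
proof (intro conjI allI impI ballI)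
  fix x assume x: "x \<in> car U"
  then obtain n where "x \<in> generated \<sigma> U (Xs n)" using finite_in_stage[of "{x}"] by auto
  then have "shat x = ts n x" by (rule shat_eq)
  moreover have "hom \<sigma> U W (ts n)" using inv by blast
  ultimately show "shat x \<in> car W" using hom_into x by metis
next
  fix f xs assume a: "length xs = farity \<sigma> f \<and> set xs \<subseteq> car U"
  then obtain n where n: "set xs \<subseteq> generated \<sigma> U (Xs n)" using finite_in_stage[of "set xs"] by auto
  then have "fun_of U f xs \<in> generated \<sigma> U (Xs n)" using a generated_closed by metis
  then have "shat (fun_of U f xs) = ts n (fun_of U f xs)" by (rule shat_eq)
  also have "\<dots> = fun_of W f (map (ts n) xs)" using inv[of n] a unfolding hom_def by blast
  also have "map (ts n) xs = map shat xs" using n shat_eq by (auto intro!: map_cong)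
  finally show "shat (fun_of U f xs) = fun_of W f (map shat xs)" .
next
  fix R xs assume a: "length xs = rarity \<sigma> R \<and> set xs \<subseteq> car U \<and> rel_of U R xs"
  then obtain n where n: "set xs \<subseteq> generated \<sigma> U (Xs n)" using finite_in_stage[of "set xs"] by auto
  have "rel_of W R (map (ts n) xs)" using inv[of n] a unfolding hom_def by blast
  moreover have "map (ts n) xs = map shat xs" using n shat_eq by (auto intro!: map_cong)
  ultimately show "rel_of W R (map shat xs)" by simp
qed

end



context ctx begin

lemma EXT:
  fixes B :: "('b,'f,'r) struct"
  assumes wfB: "wf_struct \<sigma> B" and X01: "X0 \<subseteq> X1" and X1B: "X1 \<subseteq> car B" and fin1: "finite X1"
    and phi: "emb \<sigma> (restr B (generated \<sigma> B X1)) U \<phi>"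
    and e: "emb \<sigma> (restr B (generated \<sigma> B X0)) U e"
    and h: "hom \<sigma> (restr B (generated \<sigma> B X1)) W h"
    and comp: "\<forall>x\<in>generated \<sigma> B X0. shat (e x) = h x"
  shows "\<exists>f. emb \<sigma> (restr B (generated \<sigma> B X1)) U f \<and> (\<forall>x\<in>generated \<sigma> B X0. f x = e x) \<and>
             (\<forall>x\<in>generated \<sigma> B X1. shat (f x) = h x)"
proof -
  define G0 where "G0 = generated \<sigma> B X0"
  define G1 where "G1 = generated \<sigma> B X1"
  have G01: "G0 \<subseteq> G1" unfolding G0_def G1_def by (rule generated_mono[OF X01])
  have X0G0: "X0 \<subseteq> G0" unfolding G0_def by (rule generated_base_sub)
  have X1G1: "X1 \<subseteq> G1" unfolding G1_def by (rule generated_base_sub)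
  have fin0: "finite X0" using finite_subset[OF X01 fin1] .
  obtain xs0 where xs0: "set xs0 = X0" using finite_list[OF fin0] by (elim exE)
  obtain xs1 where xs1: "set xs1 = X1" using finite_list[OF fin1] by (elim exE)
  define ys where "ys = map e xs0"
  define zs where "zs = map \<phi> xs0 @ map \<phi> xs1"
  define ws where "ws = map h xs0 @ map h xs1"
  define t where "t = (ys, zs, ws)"
  have phi': "emb \<sigma> (restr B G1) U \<phi>" using phi unfolding G1_def .
  have e': "emb \<sigma> (restr B G0) U e" using e unfolding G0_def .
  have h': "hom \<sigma> (restr B G1) W h" using h unfolding G1_def .
  have eU: "\<And>x. x \<in> G0 \<Longrightarrow> e x \<in> car U" using hom_into[OF emb_hom[OF e']] by simp
  have phU: "\<And>x. x \<in> G1 \<Longrightarrow> \<phi> x \<in> car U" using hom_into[OF emb_hom[OF phi']] by simp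
  have hW: "\<And>x. x \<in> G1 \<Longrightarrow> h x \<in> car W" using hom_into[OF h'] by simp
  have setys: "set ys = e ` X0" unfolding ys_def xs0[symmetric] by simp
  have setzs: "set zs = \<phi> ` X1" unfolding zs_def using X01 xs0 xs1 by auto
  have setws: "set ws = h ` X1" unfolding ws_def using X01 xs0 xs1 by auto
  have ysU: "set ys \<subseteq> car U" unfolding setys using eU X0G0 by blast
  have zsU: "set zs \<subseteq> car U" unfolding setzs using phU X1G1 by blast
  have wsW: "set ws \<subseteq> car W" unfolding setws using hW X1G1 by blast
  have tT: "t \<in> TT" unfolding TT_def t_def lists_eq_set using ysU zsU wsW by simp
  define A where "A = generated \<sigma> U (set ys)"
  define Bs where "Bs = generated \<sigma> U (set zs)"
  have A_eq: "A = e ` G0"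
  proof -
    have "e ` generated \<sigma> (restr B G0) X0 = generated \<sigma> U (e ` X0)"
      by (rule hom_image_generated[OF emb_hom[OF e']]) (simp add: G0_def)
    then show ?thesis unfolding A_def setys by (simp add: G0_def)
  qed
  have Bs_eq: "Bs = \<phi> ` G1"
  proof -
    have "\<phi> ` generated \<sigma> (restr B G1) X1 = generated \<sigma> U (\<phi> ` X1)"
      by (rule hom_image_generated[OF emb_hom[OF phi']]) (simp add: G1_def)
    then show ?thesis unfolding Bs_def setzs by (simp add: G1_def)
  qed
  have wfG0: "wf_struct \<sigma> (restr B G0)" unfolding G0_def by (rule wf_restr_gen)
  have wfG1: "wf_struct \<sigma> (restr B G1)" unfolding G1_def by (rule wf_restr_gen)
  have inje: "inj_on e G0" using e' unfolding emb_def by simp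
  have injphi: "inj_on \<phi> G1" using phi' unfolding emb_def by simp
  define g where "g = \<phi> \<circ> inv_into G0 e"
  have g_emb: "emb \<sigma> (restr U A) (restr U Bs) g"
  proof -
    have 1: "emb \<sigma> (restr U (e ` G0)) (restr B G0) (inv_into G0 e)" using emb_inv[OF e' wfG0] by simp
    have "emb \<sigma> (restr B G0) U \<phi>" using emb_restr_dom[OF phi', of G0] G01 by simp
    moreover have "\<phi> ` car (restr B G0) \<subseteq> Bs" unfolding Bs_eq using G01 by auto
    ultimately have 2: "emb \<sigma> (restr B G0) (restr U Bs) \<phi>" by (rule emb_restr_cod)
    show ?thesis unfolding g_def A_eq by (rule emb_comp[OF 1 2])
  qed
  have g_val: "\<And>x. x \<in> G0 \<Longrightarrow> g (e x) = \<phi> x" unfolding g_def using inje by simp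
  have g_ys: "\<forall>i<length ys. g (ys ! i) = zs ! i"
  proof (intro allI impI)
    fix i assume i: "i < length ys"
    then have i0: "i < length xs0" unfolding ys_def by simp
    then have "xs0 ! i \<in> G0" using xs0 X0G0 nth_mem by blast
    moreover have "ys ! i = e (xs0 ! i)" unfolding ys_def using i0 by simp
    moreover have "zs ! i = \<phi> (xs0 ! i)" unfolding zs_def using i0 by (simp add: nth_append)
    ultimately show "g (ys ! i) = zs ! i" using g_val by simp
  qed
  define hh where "hh = h \<circ> inv_into G1 \<phi>"
  have hh_hom: "hom \<sigma> (restr U Bs) W hh"
  proof -
    have 1: "emb \<sigma> (restr U (\<phi> ` G1)) (restr B G1) (inv_into G1 \<phi>)" using emb_inv[OF phi' wfG1] by simp
    show ?thesis unfolding hh_def Bs_eq by (rule hom_comp[OF emb_hom[OF 1] h'])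
  qed
  have hh_val: "\<And>x. x \<in> G1 \<Longrightarrow> hh (\<phi> x) = h x" unfolding hh_def using injphi by simp
  have hh_zs: "\<forall>i<length zs. hh (zs ! i) = ws ! i"
  proof (intro allI impI)
    fix i assume i: "i < length zs"
    show "hh (zs ! i) = ws ! i"
    proof (cases "i < length xs0")
      case True
      then have "xs0 ! i \<in> G1" using xs0 X0G0 G01 nth_mem by blast
      moreover have "zs ! i = \<phi> (xs0 ! i)" unfolding zs_def using True by (simp add: nth_append)
      moreover have "ws ! i = h (xs0 ! i)" unfolding ws_def using True by (simp add: nth_append)
      ultimately show ?thesis using hh_val by simp
    next
      case False
      define k where "k = i - length xs0"
      have k: "k < length xs1" using i False unfolding zs_def k_def by simp
      then have "xs1 ! k \<in> G1" using xs1 X1G1 nth_mem by blast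
      moreover have "zs ! i = \<phi> (xs1 ! k)" unfolding zs_def k_def using False k[unfolded k_def] by (simp add: nth_append)
      moreover have "ws ! i = h (xs1 ! k)" unfolding ws_def k_def using False k[unfolded k_def] by (simp add: nth_append)
      ultimately show ?thesis using hh_val by simp
    qed
  qed
  have valid: "validt t g hh"
    unfolding validt_def t_def fst_conv snd_conv A_def[symmetric] Bs_def[symmetric]
    using g_emb g_ys hh_hom hh_zs by (intro conjI)
  have "finite (e ` X0)" using fin0 by simp
  moreover have "e ` X0 \<subseteq> car U" using eU X0G0 by blast
  ultimately obtain m where m: "e ` X0 \<subseteq> generated \<sigma> U (Xs m)" using finite_in_stage by blast
  obtain n where n: "n \<ge> m" "task n = t" using task_often[OF tT] by blast
  have ysn: "set ys \<subseteq> generated \<sigma> U (Xs n)" unfolding setys using m gen_mono[OF n(1)] by blast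
  have An: "A \<subseteq> generated \<sigma> U (Xs n)" unfolding A_def by (rule generated_idem[OF ysn])
  have compat: "\<forall>a\<in>A. hh (g a) = ts n a"
  proof
    fix a assume a: "a \<in> A"
    then obtain x where x: "x \<in> G0" "a = e x" unfolding A_eq by blast
    have "hh (g a) = h x" using g_val[OF x(1)] hh_val x G01 by auto
    also have "\<dots> = shat (e x)" using comp x(1) unfolding G0_def by simp
    also have "\<dots> = ts n a" using shat_eq An a x(2) by blast
    finally show "hh (g a) = ts n a" .
  qed
  have invn: "finite (Xs n)" "Xs n \<subseteq> car U" "hom \<sigma> U W (ts n)" using inv[of n] by blast+
  have fin_ys: "finite (set ys)" by simp
  have genys: "generated \<sigma> U (set ys) \<subseteq> generated \<sigma> U (Xs n)" using An unfolding A_def .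
  from STEP[OF invn fin_ys ysU genys zsU g_emb[unfolded A_def Bs_def] hh_hom[unfolded Bs_def] compat[unfolded A_def]]
  obtain \<tau>' f' where st: "hom \<sigma> U W \<tau>'" "\<forall>x\<in>generated \<sigma> U (Xs n). \<tau>' x = ts n x"
     "emb \<sigma> (restr U (generated \<sigma> U (set zs))) U f'" "\<forall>a\<in>generated \<sigma> U (set ys). f' (g a) = a"
     "\<forall>b\<in>generated \<sigma> U (set zs). \<tau>' (f' b) = hh b" by blast
  have "Pq (Xs n) (ts n) t (\<tau>', f')"
    unfolding Pq_def t_def fst_conv snd_conv
    using valid[unfolded t_def] ysn compat[unfolded A_def] st by blast
  then have ex: "\<exists>q. Pq (Xs n) (ts n) (task n) q" unfolding n(2) by blast
  from step_cases[of n] ex obtain q where q: "Pq (Xs n) (ts n) (task n) q"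
    "Xs (Suc n) = Xs n \<union> snd q ` set (fst (snd (task n))) \<union> U0 n" "ts (Suc n) = fst q" by blast
  have q1: "Pq (Xs n) (ts n) t q" using q(1) unfolding n(2) .
  have q2: "snd q ` set zs \<subseteq> Xs (Suc n)" unfolding q(2) n(2) t_def by auto
  from q1 obtain g' h' where gh: "validt t g' h'"
     "emb \<sigma> (restr U (generated \<sigma> U (set (fst (snd t))))) U (snd q)"
     "\<forall>a\<in>generated \<sigma> U (set (fst t)). snd q (g' a) = a"
     "\<forall>b\<in>generated \<sigma> U (set (fst (snd t))). fst q (snd q b) = h' b"
    by (elim PqE)
  have f'emb: "emb \<sigma> (restr U Bs) U (snd q)" using gh(2) unfolding t_def Bs_def by simp
  have f'g': "\<forall>a\<in>A. snd q (g' a) = a" using gh(3) unfolding t_def A_def by simp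
  have f'h': "\<forall>b\<in>Bs. fst q (snd q b) = h' b" using gh(4) unfolding t_def Bs_def by simp
  have v': "emb \<sigma> (restr U A) (restr U Bs) g'" "\<forall>i<length ys. g' (ys ! i) = zs ! i"
    "hom \<sigma> (restr U Bs) W h'" "\<forall>i<length zs. h' (zs ! i) = ws ! i"
    using gh(1) unfolding validt_def t_def fst_conv snd_conv A_def Bs_def by blast+
  have gg': "\<forall>a\<in>A. g a = g' a"
  proof -
    have "\<forall>x\<in>generated \<sigma> (restr U A) (set ys). g x = g' x"
    proof (rule hom_agree_generated[OF emb_hom[OF g_emb] emb_hom[OF v'(1)]])
      show "generated \<sigma> (restr U A) (set ys) \<subseteq> car (restr U A)" unfolding A_def by simp
      show "\<forall>x\<in>set ys. g x = g' x"
      proof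
        fix x assume "x \<in> set ys"
        then obtain i where "i < length ys" "ys ! i = x" by (metis in_set_conv_nth)
        then show "g x = g' x" using g_ys v'(2) by metis
      qed
    qed
    then show ?thesis unfolding A_def by simp
  qed
  have hh': "\<forall>b\<in>Bs. hh b = h' b"
  proof -
    have "\<forall>x\<in>generated \<sigma> (restr U Bs) (set zs). hh x = h' x"
    proof (rule hom_agree_generated[OF hh_hom v'(3)])
      show "generated \<sigma> (restr U Bs) (set zs) \<subseteq> car (restr U Bs)" unfolding Bs_def by simp
      show "\<forall>x\<in>set zs. hh x = h' x"
      proof
        fix x assume "x \<in> set zs"
        then obtain i where "i < length zs" "zs ! i = x" by (metis in_set_conv_nth)
        then show "hh x = h' x" using hh_zs v'(4) by metis
      qed
    qed
    then show ?thesis unfolding Bs_def by simp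
  qed
  define f where "f = snd q \<circ> \<phi>"
  have "emb \<sigma> (restr B G1) (restr U Bs) \<phi>" using emb_restr_cod[OF phi'] Bs_eq by simp
  then have fe: "emb \<sigma> (restr B G1) U f" unfolding f_def using emb_comp f'emb by blast
  have f0: "\<forall>x\<in>G0. f x = e x"
  proof
    fix x assume x: "x \<in> G0"
    have ea: "e x \<in> A" unfolding A_eq using x by blast
    have "f x = snd q (g (e x))" unfolding f_def using g_val[OF x] by simp
    also have "\<dots> = snd q (g' (e x))" using gg' ea by simp
    also have "\<dots> = e x" using f'g' ea by blast
    finally show "f x = e x" .
  qed
  have f1: "\<forall>x\<in>G1. shat (f x) = h x"
  proof
    fix x assume x: "x \<in> G1"
    have pb: "\<phi> x \<in> Bs" unfolding Bs_eq using x by blast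
    have "snd q ` Bs = generated \<sigma> U (snd q ` set zs)"
      using hom_image_generated[OF emb_hom[OF f'emb], of "set zs"] unfolding Bs_def by simp
    also have "\<dots> \<subseteq> generated \<sigma> U (Xs (Suc n))" by (rule generated_mono[OF q2])
    finally have "f x \<in> generated \<sigma> U (Xs (Suc n))" unfolding f_def using pb by auto
    then have "shat (f x) = ts (Suc n) (f x)" by (rule shat_eq)
    also have "\<dots> = h' (\<phi> x)" unfolding q(3) f_def using f'h' pb by simp
    also have "\<dots> = hh (\<phi> x)" using hh' pb by simp
    also have "\<dots> = h x" using hh_val[OF x] .
    finally show "shat (f x) = h x" .
  qed
  show ?thesis using fe f0 f1 unfolding G0_def G1_def by blast
qed

end



lemma chain_emb:
  fixes A :: "('a,'f,'r) struct" and B :: "('b,'f,'r) struct"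
  assumes mono: "\<And>n. G n \<subseteq> G (Suc n)"
    and cover: "\<And>x. x \<in> car A \<Longrightarrow> \<exists>n. x \<in> G n"
    and Gsub: "\<And>n. G n \<subseteq> car A"
    and closed: "\<And>n f xs. length xs = farity \<sigma> f \<Longrightarrow> set xs \<subseteq> G n \<Longrightarrow> fun_of A f xs \<in> G n"
    and embs: "\<And>n. emb \<sigma> (restr A (G n)) B (E n)"
    and agree: "\<And>n. \<forall>x\<in>G n. E (Suc n) x = E n x"
  shows "emb \<sigma> A B (\<lambda>x. E (LEAST n. x \<in> G n) x) \<and> (\<forall>n. \<forall>x\<in>G n. E (LEAST n. x \<in> G n) x = E n x)"
proof -
  define L where "L = (\<lambda>x. E (LEAST n. x \<in> G n) x)"
  have Gmono: "\<And>m n. m \<le> n \<Longrightarrow> G m \<subseteq> G n"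
  proof -
    fix m n :: nat assume "m \<le> n" then show "G m \<subseteq> G n"
    proof (induction n rule: dec_induct)
      case base then show ?case by (rule order_refl)
    next
      case (step n) show ?case by (rule order_trans[OF step(3) mono])
    qed
  qed
  have Eagree: "\<And>m n. m \<le> n \<Longrightarrow> \<forall>x\<in>G m. E n x = E m x"
  proof -
    fix m n :: nat assume "m \<le> n" then show "\<forall>x\<in>G m. E n x = E m x"
    proof (induction n rule: dec_induct)
      case base then show ?case by simp
    next
      case (step n)
      show ?case
      proof
        fix x assume x: "x \<in> G m"
        then have "x \<in> G n" using Gmono[OF step(1)] by blast
        then have "E (Suc n) x = E n x" using agree[of n] by blast
        then show "E (Suc n) x = E m x" using step(3) x by simp
      qed
    qed
  qed
  have Leq: "\<And>n x. x \<in> G n \<Longrightarrow> L x = E n x"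
  proof -
    fix n x assume x: "x \<in> G n"
    define m where "m = (LEAST n. x \<in> G n)"
    have "x \<in> G m" "m \<le> n" unfolding m_def using x by (auto intro: LeastI Least_le)
    then have "E n x = E m x" using Eagree by blast
    then show "L x = E n x" unfolding L_def m_def[symmetric] by simp
  qed
  have fin: "\<And>F. finite F \<Longrightarrow> F \<subseteq> car A \<Longrightarrow> \<exists>n. F \<subseteq> G n"
  proof -
    fix F :: "'a set" assume "finite F" "F \<subseteq> car A"
    then show "\<exists>n. F \<subseteq> G n"
    proof (induction F rule: finite_induct)
      case empty then show ?case by blast
    next
      case (insert u F)
      have "F \<subseteq> car A" using insert.prems by blast
      from insert.IH[OF this] obtain n where n: "F \<subseteq> G n" by (elim exE)
      have "u \<in> car A" using insert.prems by blast
      from cover[OF this] obtain m where m: "u \<in> G m" by (elim exE)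
      have "F \<subseteq> G (max n m)" using n Gmono[of n "max n m"] by simp
      moreover have "u \<in> G (max n m)" using m Gmono[of m "max n m"] by auto
      ultimately have "insert u F \<subseteq> G (max n m)" by blast
      then show ?case by blast
    qed
  qed
  have homL: "hom \<sigma> A B L"
    unfolding hom_def
  proof (intro conjI allI impI ballI)
    fix x assume x: "x \<in> car A"
    from cover[OF x] obtain n where n: "x \<in> G n" by (elim exE)
    have "E n x \<in> car B" using hom_into[OF emb_hom[OF embs[of n]]] n by simp
    then show "L x \<in> car B" using Leq[OF n] by simp
  next
    fix f xs assume a: "length xs = farity \<sigma> f \<and> set xs \<subseteq> car A"
    then obtain n where n: "set xs \<subseteq> G n" using fin[of "set xs"] by blast
    have c: "fun_of A f xs \<in> G n" using closed a n by blast
    have "E n (fun_of (restr A (G n)) f xs) = fun_of B f (map (E n) xs)"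
      using emb_hom[OF embs[of n]] a n unfolding hom_def by simp
    moreover have "map (E n) xs = map L xs" using n Leq by (auto intro!: map_cong)
    ultimately show "L (fun_of A f xs) = fun_of B f (map L xs)" using Leq[OF c] by simp
  next
    fix R xs assume a: "length xs = rarity \<sigma> R \<and> set xs \<subseteq> car A \<and> rel_of A R xs"
    then obtain n where n: "set xs \<subseteq> G n" using fin[of "set xs"] by blast
    have "rel_of B R (map (E n) xs)"
      using emb_hom[OF embs[of n]] a n unfolding hom_def by simp
    moreover have "map (E n) xs = map L xs" using n Leq by (auto intro!: map_cong)
    ultimately show "rel_of B R (map L xs)" by simp
  qed
  have injL: "inj_on L (car A)"
  proof (rule inj_onI)
    fix x y assume x: "x \<in> car A" and y: "y \<in> car A" and eq: "L x = L y"
    obtain n where n: "{x, y} \<subseteq> G n" using fin[of "{x,y}"] x y by blast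
    have "inj_on (E n) (G n)" using embs[of n] unfolding emb_def by simp
    moreover have "E n x = E n y" using eq Leq[of x n] Leq[of y n] n by simp
    ultimately show "x = y" using n by (auto dest: inj_onD)
  qed
  have refl: "\<forall>R xs. length xs = rarity \<sigma> R \<and> set xs \<subseteq> car A \<and> rel_of B R (map L xs) \<longrightarrow> rel_of A R xs"
  proof (intro allI impI)
    fix R xs assume a: "length xs = rarity \<sigma> R \<and> set xs \<subseteq> car A \<and> rel_of B R (map L xs)"
    then obtain n where n: "set xs \<subseteq> G n" using fin[of "set xs"] by blast
    have meq: "map (E n) xs = map L xs" using n Leq by (auto intro!: map_cong)
    have r: "rel_of B R (map (E n) xs)" unfolding meq using a by blast
    have "\<forall>R xs. length xs = rarity \<sigma> R \<and> set xs \<subseteq> G n \<and> rel_of B R (map (E n) xs) \<longrightarrow> rel_of A R xs"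
      using embs[of n] unfolding emb_def by simp
    then show "rel_of A R xs" using a n r by blast
  qed
  show ?thesis using homL injL refl Leq unfolding emb_def L_def by blast
qed

lemma substruct_emb_restr:
  assumes "substruct \<sigma> A U" "emb \<sigma> A B h"
  shows "emb \<sigma> (restr U (car A)) B h"
  using assms unfolding substruct_def emb_def hom_def by (simp add: subset_iff)

lemma substruct_gen:
  assumes "substruct \<sigma> A U" "generated \<sigma> A X = car A"
  shows "generated \<sigma> U X = car A"
proof -
  have fa: "\<And>f xs. length xs = farity \<sigma> f \<Longrightarrow> set xs \<subseteq> car A \<Longrightarrow> fun_of A f xs = fun_of U f xs"
    using assms(1) unfolding substruct_def by blast
  have "generated \<sigma> A X \<subseteq> generated \<sigma> U X"
  proof
    fix x assume "x \<in> generated \<sigma> A X" then show "x \<in> generated \<sigma> U X"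
    proof (induction rule: generated.induct)
      case (gen_base x) then show ?case by (rule generated.gen_base)
    next
      case (gen_fun xs f)
      have "set xs \<subseteq> car A" using gen_fun(2) assms(2) by blast
      then have "fun_of A f xs = fun_of U f xs" using fa gen_fun(1) by blast
      then show ?case using gen_fun generated.gen_fun[of xs \<sigma> f U X] by simp
    qed
  qed
  moreover have "generated \<sigma> U X \<subseteq> generated \<sigma> A X"
  proof
    fix x assume "x \<in> generated \<sigma> U X" then show "x \<in> generated \<sigma> A X"
    proof (induction rule: generated.induct)
      case (gen_base x) then show ?case by (rule generated.gen_base)
    next
      case (gen_fun xs f)
      have "set xs \<subseteq> car A" using gen_fun(2) assms(2) by blast
      then have "fun_of A f xs = fun_of U f xs" using fa gen_fun(1) by blast
      then show ?case using gen_fun generated.gen_fun[of xs \<sigma> f A X] by simp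
    qed
  qed
  ultimately show ?thesis using assms(2) by simp
qed

context ctx begin

lemma UF:
  fixes A :: "('a,'f,'r) struct"
  assumes wfA: "wf_struct \<sigma> A" and cA: "countable (car A)" and le: "locemb A" and h: "hom \<sigma> A W h"
  shows "\<exists>\<iota>. emb \<sigma> A U \<iota> \<and> (\<forall>x\<in>car A. shat (\<iota> x) = h x)"
proof -
  define Y where "Y n = from_nat_into (car A) ` {..<n} \<inter> car A" for n
  define G where "G n = generated \<sigma> A (Y n)" for n
  have Yfin: "\<And>n. finite (Y n)" unfolding Y_def by simp
  have YA: "\<And>n. Y n \<subseteq> car A" unfolding Y_def by blast
  have Ymono: "\<And>n. Y n \<subseteq> Y (Suc n)" unfolding Y_def by auto
  have Gsub: "\<And>n. G n \<subseteq> car A" unfolding G_def using generated_sub[OF wfA YA] .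
  have Gmono: "\<And>n. G n \<subseteq> G (Suc n)" unfolding G_def using generated_mono[OF Ymono] .
  have Y0: "Y 0 = {}" unfolding Y_def by simp
  have phi: "\<And>n. \<exists>\<phi>. emb \<sigma> (restr A (G n)) U \<phi>"
  proof -
    fix n
    have "substruct \<sigma> (restr A (G n)) A \<and> fin_gen \<sigma> (restr A (G n))"
      unfolding G_def using substruct_restr_gen[OF wfA YA] fin_gen_restr_gen[OF Yfin] by (rule conjI)
    then show "\<exists>\<phi>. emb \<sigma> (restr A (G n)) U \<phi>" using le[unfolded locemb_def, rule_format] by blast
  qed
  have hG: "\<And>n. hom \<sigma> (restr A (G n)) W h" using hom_restr_dom[OF h Gsub] .
  define P0 where "P0 e \<longleftrightarrow> emb \<sigma> (restr A (G 0)) U e \<and> (\<forall>x\<in>G 0. shat (e x) = h x)" for e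
  define Ps where "Ps n e f \<longleftrightarrow> emb \<sigma> (restr A (G (Suc n))) U f \<and> (\<forall>x\<in>G n. f x = e x) \<and> (\<forall>x\<in>G (Suc n). shat (f x) = h x)" for n e f
  have ex0: "\<exists>e. P0 e"
  proof -
    obtain \<phi> where \<phi>: "emb \<sigma> (restr A (G 0)) U \<phi>" using phi by blast
    have "\<forall>x\<in>generated \<sigma> (restr A (G 0)) (Y 0). (shat \<circ> \<phi>) x = h x"
      by (rule hom_agree_generated[OF hom_comp[OF emb_hom[OF \<phi>] shat_hom] hG]) (simp_all add: G_def Y0)
    then have "\<forall>x\<in>G 0. shat (\<phi> x) = h x" unfolding G_def by simp
    then show ?thesis unfolding P0_def using \<phi> by blast
  qed
  define E where "E = rec_nat (SOME e. P0 e) (\<lambda>n e. SOME f. Ps n e f)"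
  have E0: "E 0 = (SOME e. P0 e)" unfolding E_def by simp
  have ES: "\<And>n. E (Suc n) = (SOME f. Ps n (E n) f)" unfolding E_def by simp
  have Einv: "\<And>n. emb \<sigma> (restr A (G n)) U (E n) \<and> (\<forall>x\<in>G n. shat (E n x) = h x)"
  proof -
    fix n show "emb \<sigma> (restr A (G n)) U (E n) \<and> (\<forall>x\<in>G n. shat (E n x) = h x)"
    proof (induction n)
      case 0
      have "P0 (E 0)" unfolding E0 using ex0 by (rule someI_ex)
      then show ?case unfolding P0_def .
    next
      case (Suc n)
      obtain \<phi> where \<phi>: "emb \<sigma> (restr A (G (Suc n))) U \<phi>" using phi by blast
      have "\<exists>f. Ps n (E n) f"
        using EXT[OF wfA Ymono YA Yfin \<phi>[unfolded G_def] conjunct1[OF Suc, unfolded G_def] hG[unfolded G_def] conjunct2[OF Suc, unfolded G_def]]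
        unfolding Ps_def G_def by blast
      then have "Ps n (E n) (E (Suc n))" unfolding ES by (rule someI_ex)
      then show ?case unfolding Ps_def by blast
    qed
  qed
  have Eagree: "\<And>n. \<forall>x\<in>G n. E (Suc n) x = E n x"
  proof -
    fix n
    obtain \<phi> where \<phi>: "emb \<sigma> (restr A (G (Suc n))) U \<phi>" using phi by blast
    have "\<exists>f. Ps n (E n) f"
      using EXT[OF wfA Ymono YA Yfin \<phi>[unfolded G_def] conjunct1[OF Einv[of n], unfolded G_def] hG[unfolded G_def] conjunct2[OF Einv[of n], unfolded G_def]]
      unfolding Ps_def G_def by blast
    then have "Ps n (E n) (E (Suc n))" unfolding ES by (rule someI_ex)
    then show "\<forall>x\<in>G n. E (Suc n) x = E n x" unfolding Ps_def by blast
  qed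
  have cover: "\<And>x. x \<in> car A \<Longrightarrow> \<exists>n. x \<in> G n"
  proof -
    fix x assume x: "x \<in> car A"
    from from_nat_into_surj[OF cA x] obtain i where i: "from_nat_into (car A) i = x" by (elim exE)
    have "i \<in> {..<Suc i}" by simp
    then have "x \<in> from_nat_into (car A) ` {..<Suc i}" by (rule image_eqI[where f="from_nat_into (car A)", OF i[symmetric]])
    then have "x \<in> Y (Suc i)" unfolding Y_def using x by (rule IntI)
    then have "x \<in> G (Suc i)" unfolding G_def by (rule generated.gen_base)
    then show "\<exists>n. x \<in> G n" by (rule exI)
  qed
  have closed: "\<And>n f xs. length xs = farity \<sigma> f \<Longrightarrow> set xs \<subseteq> G n \<Longrightarrow> fun_of A f xs \<in> G n"
    unfolding G_def by (rule generated_closed)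
  have embs: "\<And>n. emb \<sigma> (restr A (G n)) U (E n)" using Einv by blast
  have LL: "emb \<sigma> A U (\<lambda>x. E (LEAST n. x \<in> G n) x) \<and> (\<forall>n. \<forall>x\<in>G n. E (LEAST n. x \<in> G n) x = E n x)"
  proof (rule chain_emb[where G=G and A=A and E=E and B=U])
    show "\<And>n. G n \<subseteq> G (Suc n)" by (rule Gmono)
    show "\<And>x. x \<in> car A \<Longrightarrow> \<exists>n. x \<in> G n" by (rule cover)
    show "\<And>n. G n \<subseteq> car A" by (rule Gsub)
    show "\<And>n f xs. length xs = farity \<sigma> f \<Longrightarrow> set xs \<subseteq> G n \<Longrightarrow> fun_of A f xs \<in> G n" by (rule closed)
    show "\<And>n. emb \<sigma> (restr A (G n)) U (E n)" by (rule embs)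
    show "\<And>n. \<forall>x\<in>G n. E (Suc n) x = E n x" by (rule Eagree)
  qed
  have L: "emb \<sigma> A U (\<lambda>x. E (LEAST n. x \<in> G n) x)" "\<forall>n. \<forall>x\<in>G n. E (LEAST n. x \<in> G n) x = E n x"
    using LL by simp_all
  have "\<forall>x\<in>car A. shat (E (LEAST n. x \<in> G n) x) = h x"
  proof
    fix x assume "x \<in> car A"
    then obtain n where n: "x \<in> G n" using cover by blast
    then show "shat (E (LEAST n. x \<in> G n) x) = h x" using L(2) Einv[of n] by simp
  qed
  with L(1) show ?thesis by (intro exI[where x="\<lambda>x. E (LEAST n. x \<in> G n) x"] conjI)
qed

end



context ctx begin

definition Iv :: "'u set \<Rightarrow> ('u \<Rightarrow> 'u) \<Rightarrow> bool" where
  "Iv X p \<longleftrightarrow> finite X \<and> X \<subseteq> car U \<and> emb \<sigma> (restr U (generated \<sigma> U X)) U p \<and>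
     (\<forall>x\<in>generated \<sigma> U X. shat (p x) = shat x)"

definition fwd :: "'u set \<Rightarrow> ('u \<Rightarrow> 'u) \<Rightarrow> 'u \<Rightarrow> ('u \<Rightarrow> 'u)" where
  "fwd X p u = (SOME f. emb \<sigma> (restr U (generated \<sigma> U (X \<union> {u}))) U f \<and> (\<forall>x\<in>generated \<sigma> U X. f x = p x) \<and>
      (\<forall>x\<in>generated \<sigma> U (X \<union> {u}). shat (f x) = shat x))"

lemma fwd_prop:
  assumes "Iv X p" "u \<in> car U"
  shows "emb \<sigma> (restr U (generated \<sigma> U (X \<union> {u}))) U (fwd X p u) \<and> (\<forall>x\<in>generated \<sigma> U X. fwd X p u x = p x) \<and>
      (\<forall>x\<in>generated \<sigma> U (X \<union> {u}). shat (fwd X p u x) = shat x)"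
proof -
  have fX: "finite X" and XU: "X \<subseteq> car U" and p: "emb \<sigma> (restr U (generated \<sigma> U X)) U p"
    and ps: "\<forall>x\<in>generated \<sigma> U X. shat (p x) = shat x" using assms(1) unfolding Iv_def by blast+
  have X1: "X \<union> {u} \<subseteq> car U" using XU assms(2) by blast
  have f1: "finite (X \<union> {u})" using fX by simp
  have sub: "X \<subseteq> X \<union> {u}" by blast
  have phi: "emb \<sigma> (restr U (generated \<sigma> U (X \<union> {u}))) U id"
    by (rule emb_id_restr[OF generated_sub[OF wfU X1]])
  have h: "hom \<sigma> (restr U (generated \<sigma> U (X \<union> {u}))) W shat"
    by (rule hom_restr_dom[OF shat_hom generated_sub[OF wfU X1]])
  have "\<exists>f. emb \<sigma> (restr U (generated \<sigma> U (X \<union> {u}))) U f \<and> (\<forall>x\<in>generated \<sigma> U X. f x = p x) \<and>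
      (\<forall>x\<in>generated \<sigma> U (X \<union> {u}). shat (f x) = shat x)"
    by (rule EXT[OF wfU sub X1 f1 phi p h ps])
  then show ?thesis unfolding fwd_def by (rule someI_ex)
qed

lemma inv_image_Iv:
  assumes fZ: "finite Z" and ZU: "Z \<subseteq> car U" and f: "emb \<sigma> (restr U (generated \<sigma> U Z)) U f"
    and fs: "\<forall>x\<in>generated \<sigma> U Z. shat (f x) = shat x"
  shows "Iv (f ` Z) (inv_into (generated \<sigma> U Z) f) \<and> generated \<sigma> U (f ` Z) = f ` generated \<sigma> U Z"
proof -
  define GZ where "GZ = generated \<sigma> U Z"
  have GZU: "GZ \<subseteq> car U" unfolding GZ_def by (rule generated_sub[OF wfU ZU])
  have geq: "generated \<sigma> U (f ` Z) = f ` GZ"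
  proof -
    have "f ` generated \<sigma> (restr U GZ) Z = generated \<sigma> U (f ` Z)"
      by (rule hom_image_generated[OF emb_hom[OF f[folded GZ_def]]]) (simp add: GZ_def)
    then show ?thesis by (simp add: GZ_def)
  qed
  have wfZ: "wf_struct \<sigma> (restr U GZ)" unfolding GZ_def by (rule wf_restr_gen)
  have inj: "inj_on f GZ" using f unfolding emb_def GZ_def by simp
  have ZGZ: "Z \<subseteq> GZ" unfolding GZ_def by (rule generated_base_sub)
  have fU: "\<And>x. x \<in> GZ \<Longrightarrow> f x \<in> car U" using hom_into[OF emb_hom[OF f]] unfolding GZ_def by simp
  have 1: "emb \<sigma> (restr U (f ` GZ)) (restr U GZ) (inv_into GZ f)"
    using emb_inv[OF f[folded GZ_def] wfZ] by simp
  have "emb \<sigma> (restr U (f ` GZ)) U (id \<circ> inv_into GZ f)"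
    by (rule emb_comp[OF 1 emb_id_restr[OF GZU]])
  then have e: "emb \<sigma> (restr U (generated \<sigma> U (f ` Z))) U (inv_into GZ f)" unfolding geq by simp
  have s: "\<forall>y\<in>generated \<sigma> U (f ` Z). shat (inv_into GZ f y) = shat y"
  proof
    fix y assume "y \<in> generated \<sigma> U (f ` Z)"
    then obtain z where z: "z \<in> GZ" "y = f z" unfolding geq by blast
    have "inv_into GZ f y = z" using z inj by simp
    then show "shat (inv_into GZ f y) = shat y" using fs z unfolding GZ_def by simp
  qed
  have "finite (f ` Z)" using fZ by simp
  moreover have "f ` Z \<subseteq> car U" using fU ZGZ by blast
  ultimately show ?thesis using e s geq unfolding Iv_def GZ_def by blast
qed

definition bfstep :: "'u set \<Rightarrow> ('u \<Rightarrow> 'u) \<Rightarrow> 'u \<Rightarrow> 'u set \<times> ('u \<Rightarrow> 'u)" where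
  "bfstep X p u = (let f1 = fwd X p u; Z1 = X \<union> {u}; Y = f1 ` Z1; q = inv_into (generated \<sigma> U Z1) f1;
                      f2 = fwd Y q u; Z2 = Y \<union> {u} in (f2 ` Z2, inv_into (generated \<sigma> U Z2) f2))"

lemma bfstep_prop:
  assumes I: "Iv X p" and u: "u \<in> car U"
  shows "Iv (fst (bfstep X p u)) (snd (bfstep X p u)) \<and>
    generated \<sigma> U X \<subseteq> generated \<sigma> U (fst (bfstep X p u)) \<and>
    (\<forall>x\<in>generated \<sigma> U X. snd (bfstep X p u) x = p x) \<and>
    u \<in> generated \<sigma> U (fst (bfstep X p u)) \<and>
    u \<in> snd (bfstep X p u) ` generated \<sigma> U (fst (bfstep X p u))"
proof -
  define f1 where "f1 = fwd X p u"
  define Z1 where "Z1 = X \<union> {u}"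
  define Y where "Y = f1 ` Z1"
  define q where "q = inv_into (generated \<sigma> U Z1) f1"
  define f2 where "f2 = fwd Y q u"
  define Z2 where "Z2 = Y \<union> {u}"
  define X' where "X' = f2 ` Z2"
  define p' where "p' = inv_into (generated \<sigma> U Z2) f2"
  have bs: "bfstep X p u = (X', p')"
    unfolding bfstep_def Let_def f1_def Z1_def Y_def q_def f2_def Z2_def X'_def p'_def by (rule refl)
  have fX: "finite X" and XU: "X \<subseteq> car U" using I unfolding Iv_def by blast+
  have F1: "emb \<sigma> (restr U (generated \<sigma> U Z1)) U f1" "\<forall>x\<in>generated \<sigma> U X. f1 x = p x"
      "\<forall>x\<in>generated \<sigma> U Z1. shat (f1 x) = shat x"
    using fwd_prop[OF I u] unfolding f1_def Z1_def by blast+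
  have fZ1: "finite Z1" unfolding Z1_def using fX by simp
  have Z1U: "Z1 \<subseteq> car U" unfolding Z1_def using XU u by blast
  have IY: "Iv Y q" and gY: "generated \<sigma> U Y = f1 ` generated \<sigma> U Z1"
    using inv_image_Iv[OF fZ1 Z1U F1(1) F1(3)] unfolding Y_def q_def by blast+
  have F2: "emb \<sigma> (restr U (generated \<sigma> U Z2)) U f2" "\<forall>x\<in>generated \<sigma> U Y. f2 x = q x"
      "\<forall>x\<in>generated \<sigma> U Z2. shat (f2 x) = shat x"
    using fwd_prop[OF IY u] unfolding f2_def Z2_def by blast+
  have fY: "finite Y" and YU: "Y \<subseteq> car U" using IY unfolding Iv_def by blast+
  have fZ2: "finite Z2" unfolding Z2_def using fY by simp
  have Z2U: "Z2 \<subseteq> car U" unfolding Z2_def using YU u by blast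
  have IX': "Iv X' p'" and gX': "generated \<sigma> U X' = f2 ` generated \<sigma> U Z2"
    using inv_image_Iv[OF fZ2 Z2U F2(1) F2(3)] unfolding X'_def p'_def by blast+
  have inj1: "inj_on f1 (generated \<sigma> U Z1)" using F1(1) unfolding emb_def by simp
  have inj2: "inj_on f2 (generated \<sigma> U Z2)" using F2(1) unfolding emb_def by simp
  have YZ2: "generated \<sigma> U Y \<subseteq> generated \<sigma> U Z2" unfolding Z2_def by (rule generated_mono) blast
  have key: "\<And>x. x \<in> generated \<sigma> U Z1 \<Longrightarrow> x \<in> generated \<sigma> U X' \<and> p' x = f1 x"
  proof -
    fix x assume x: "x \<in> generated \<sigma> U Z1"
    have y: "f1 x \<in> generated \<sigma> U Y" unfolding gY using x by blast
    have "f2 (f1 x) = q (f1 x)" using F2(2) y by blast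
    also have "\<dots> = x" unfolding q_def using inj1 x by simp
    finally have e: "f2 (f1 x) = x" .
    have y2: "f1 x \<in> generated \<sigma> U Z2" using y YZ2 by blast
    have "x \<in> f2 ` generated \<sigma> U Z2" using e y2 by (metis image_eqI)
    then have "x \<in> generated \<sigma> U X'" unfolding gX' .
    moreover have "p' x = f1 x" unfolding p'_def using e[symmetric] inj2 y2 by (metis inv_into_f_f)
    ultimately show "x \<in> generated \<sigma> U X' \<and> p' x = f1 x" by blast
  qed
  have XZ1: "generated \<sigma> U X \<subseteq> generated \<sigma> U Z1" unfolding Z1_def by (rule generated_mono) blast
  have uZ1: "u \<in> generated \<sigma> U Z1" unfolding Z1_def by (rule generated.gen_base) simp
  have uZ2: "u \<in> generated \<sigma> U Z2" unfolding Z2_def by (rule generated.gen_base) simp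
  have c2: "generated \<sigma> U X \<subseteq> generated \<sigma> U X'" using key XZ1 by blast
  have c3: "\<forall>x\<in>generated \<sigma> U X. p' x = p x" using key XZ1 F1(2) by auto
  have c4: "u \<in> generated \<sigma> U X'" using key uZ1 by blast
  have "f2 u \<in> generated \<sigma> U X'" unfolding gX' using uZ2 by blast
  moreover have "p' (f2 u) = u" unfolding p'_def using inj2 uZ2 by simp
  ultimately have c5: "u \<in> p' ` generated \<sigma> U X'" by (metis image_eqI)
  show ?thesis unfolding bs fst_conv snd_conv using IX' c2 c3 c4 c5 by blast
qed

lemma BF:
  assumes A: "substruct \<sigma> A U" "fin_gen \<sigma> A" and \<iota>: "emb \<sigma> A U \<iota>" and \<iota>s: "\<forall>x\<in>car A. shat (\<iota> x) = shat x"
  shows "\<exists>\<alpha>. automorphism \<sigma> U \<alpha> \<and> (\<forall>x\<in>car U. shat (\<alpha> x) = shat x) \<and> (\<forall>x\<in>car A. \<alpha> x = \<iota> x)"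
proof (cases "car U = {}")
  case True
  then have "car A = {}" using A(1) unfolding substruct_def by blast
  moreover have "automorphism \<sigma> U id" unfolding automorphism_def by (rule iso_id)
  ultimately show ?thesis using True by blast
next
  case False
  define u where "u n = from_nat_into (car U) n" for n
  have uU: "\<And>n. u n \<in> car U" unfolding u_def using from_nat_into[OF False] by blast
  obtain XA where XA: "finite XA" "XA \<subseteq> car A" "generated \<sigma> A XA = car A" using A(2) unfolding fin_gen_def by blast
  have gA: "generated \<sigma> U XA = car A" by (rule substruct_gen[OF A(1) XA(3)])
  have AU: "car A \<subseteq> car U" using A(1) unfolding substruct_def by blast
  have I0: "Iv XA \<iota>" unfolding Iv_def gA using XA AU substruct_emb_restr[OF A(1) \<iota>] \<iota>s by blast
  define St where "St = rec_nat (XA, \<iota>) (\<lambda>n st. bfstep (fst st) (snd st) (u n))"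
  have St0: "St 0 = (XA, \<iota>)" unfolding St_def by simp
  have StS: "\<And>n. St (Suc n) = bfstep (fst (St n)) (snd (St n)) (u n)" unfolding St_def by simp
  define G where "G n = generated \<sigma> U (fst (St n))" for n
  define E where "E n = snd (St n)" for n
  have Iall: "\<And>n. Iv (fst (St n)) (snd (St n))"
  proof -
    fix n show "Iv (fst (St n)) (snd (St n))"
    proof (induction n)
      case 0 then show ?case unfolding St0 using I0 by simp
    next
      case (Suc n) then show ?case unfolding StS using bfstep_prop[OF Suc uU[of n]] by blast
    qed
  qed
  have P: "\<And>n. G n \<subseteq> G (Suc n) \<and> (\<forall>x\<in>G n. E (Suc n) x = E n x) \<and> u n \<in> G (Suc n) \<and> u n \<in> E (Suc n) ` G (Suc n)"
    unfolding G_def E_def StS using bfstep_prop[OF Iall uU] by blast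
  have Gsub: "\<And>n. G n \<subseteq> car U" unfolding G_def using Iall generated_sub[OF wfU] unfolding Iv_def by blast
  have embs: "\<And>n. emb \<sigma> (restr U (G n)) U (E n)" unfolding G_def E_def using Iall unfolding Iv_def by blast
  have cover: "\<And>x. x \<in> car U \<Longrightarrow> \<exists>n. x \<in> G n"
  proof -
    fix x assume x: "x \<in> car U"
    from from_nat_into_surj[OF cU x] obtain i where i: "u i = x" unfolding u_def by (elim exE)
    have "x \<in> G (Suc i)" using P[of i] unfolding i by blast
    then show "\<exists>n. x \<in> G n" by (rule exI)
  qed
  have closed: "\<And>n f xs. length xs = farity \<sigma> f \<Longrightarrow> set xs \<subseteq> G n \<Longrightarrow> fun_of U f xs \<in> G n"
    unfolding G_def by (rule generated_closed)
  have LL: "emb \<sigma> U U (\<lambda>x. E (LEAST n. x \<in> G n) x) \<and> (\<forall>n. \<forall>x\<in>G n. E (LEAST n. x \<in> G n) x = E n x)"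
  proof (rule chain_emb[where G=G and A=U and E=E and B=U])
    show "\<And>n. G n \<subseteq> G (Suc n)" using P by blast
    show "\<And>x. x \<in> car U \<Longrightarrow> \<exists>n. x \<in> G n" by (rule cover)
    show "\<And>n. G n \<subseteq> car U" by (rule Gsub)
    show "\<And>n f xs. length xs = farity \<sigma> f \<Longrightarrow> set xs \<subseteq> G n \<Longrightarrow> fun_of U f xs \<in> G n" by (rule closed)
    show "\<And>n. emb \<sigma> (restr U (G n)) U (E n)" by (rule embs)
    show "\<And>n. \<forall>x\<in>G n. E (Suc n) x = E n x" using P by blast
  qed
  define \<alpha> where "\<alpha> = (\<lambda>x. E (LEAST n. x \<in> G n) x)"
  have ae: "emb \<sigma> U U \<alpha>" and aE: "\<And>n x. x \<in> G n \<Longrightarrow> \<alpha> x = E n x"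
    using LL unfolding \<alpha>_def by blast+
  have inj: "inj_on \<alpha> (car U)" using ae unfolding emb_def by blast
  have "\<alpha> ` car U \<subseteq> car U" using hom_image[OF emb_hom[OF ae]] .
  moreover have "car U \<subseteq> \<alpha> ` car U"
  proof
    fix v assume v: "v \<in> car U"
    from from_nat_into_surj[OF cU v] obtain i where i: "u i = v" unfolding u_def by (elim exE)
    then obtain y where y: "y \<in> G (Suc i)" "v = E (Suc i) y" using P[of i] by blast
    have "\<alpha> y = v" using aE[OF y(1)] y(2) by simp
    moreover have "y \<in> car U" using y(1) Gsub by blast
    ultimately show "v \<in> \<alpha> ` car U" by blast
  qed
  ultimately have "bij_betw \<alpha> (car U) (car U)" using inj unfolding bij_betw_def by blast
  then have aut: "automorphism \<sigma> U \<alpha>" unfolding automorphism_def iso_def using ae by blast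
  have s1: "\<forall>x\<in>car U. shat (\<alpha> x) = shat x"
  proof
    fix x assume "x \<in> car U"
    then obtain n where n: "x \<in> G n" using cover by blast
    have "\<forall>x\<in>G n. shat (E n x) = shat x" using Iall[of n] unfolding Iv_def G_def E_def by blast
    then show "shat (\<alpha> x) = shat x" using aE[OF n] n by simp
  qed
  have s2: "\<forall>x\<in>car A. \<alpha> x = \<iota> x"
  proof
    fix x assume x: "x \<in> car A"
    have "x \<in> G 0" unfolding G_def St0 fst_conv gA using x .
    then show "\<alpha> x = \<iota> x" using aE[of x 0] unfolding E_def St0 by simp
  qed
  show ?thesis using aut s1 s2 by blast
qed

end



context ctx begin

lemma locemb_from_cbar:
  assumes "in_cbar \<sigma> K A" and K: "\<forall>D\<in>K. \<exists>B'. substruct \<sigma> B' U \<and> isomorphic \<sigma> D B'"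
  shows "locemb A"
  unfolding locemb_def
proof (intro allI impI)
  fix B assume B: "substruct \<sigma> B A \<and> fin_gen \<sigma> B"
  then obtain D where D: "D \<in> K" "isomorphic \<sigma> B D" using assms(1) unfolding in_cbar_def by blast
  obtain k1 where k1: "iso \<sigma> B D k1" using D(2) unfolding isomorphic_def by blast
  obtain B' where B': "substruct \<sigma> B' U" "isomorphic \<sigma> D B'" using K D(1) by blast
  obtain k2 where k2: "iso \<sigma> D B' k2" using B'(2) unfolding isomorphic_def by blast
  have "emb \<sigma> B B' (k2 \<circ> k1)" by (rule emb_comp[OF iso_emb[OF k1] iso_emb[OF k2]])
  then have "emb \<sigma> B U (id \<circ> (k2 \<circ> k1))" by (rule emb_comp[OF _ substruct_emb_id[OF B'(1)]])
  then show "\<exists>\<phi>. emb \<sigma> B U \<phi>" by blast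
qed

lemma shat_uh: 
  assumes lim: "\<forall>A\<in>C. \<exists>B. substruct \<sigma> B U \<and> fin_gen \<sigma> B \<and> isomorphic \<sigma> A B"
    and W: "in_cbar \<sigma> C W"
  shows "uh_retraction \<sigma> U W shat"
proof -
  have KC: "\<forall>D\<in>C. \<exists>B'. substruct \<sigma> B' U \<and> isomorphic \<sigma> D B'" using lim by blast
  have KA: "\<forall>D\<in>Age \<sigma> U. \<exists>B'. substruct \<sigma> B' U \<and> isomorphic \<sigma> D B'" unfolding Age_def by blast
  have leW: "locemb W" by (rule locemb_from_cbar[OF W KC])
  have idW: "hom \<sigma> W W id" by (rule emb_hom[OF iso_emb[OF iso_id]])
  obtain \<iota> where \<iota>: "emb \<sigma> W U \<iota>" "\<forall>x\<in>car W. shat (\<iota> x) = id x"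
    using UF[OF wfW cW leW idW] by blast
  have ret: "retraction \<sigma> U W shat"
    unfolding retraction_def using shat_hom emb_hom[OF \<iota>(1)] \<iota>(2) by auto
  have univ: "\<forall>A :: (nat,'f,'r) struct. \<forall>h. in_cbar \<sigma> (Age \<sigma> U) A \<and> hom \<sigma> A W h \<longrightarrow>
        (\<exists>\<iota>. emb \<sigma> A U \<iota> \<and> (\<forall>x\<in>car A. h x = shat (\<iota> x)))"
  proof (intro allI impI)
    fix A :: "(nat,'f,'r) struct" and h
    assume a: "in_cbar \<sigma> (Age \<sigma> U) A \<and> hom \<sigma> A W h"
    have wfA: "wf_struct \<sigma> A" and cA: "countable (car A)" using a unfolding in_cbar_def by blast+
    have leA: "locemb A" using locemb_from_cbar[OF conjunct1[OF a] KA] .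
    obtain \<kappa> where \<kappa>: "emb \<sigma> A U \<kappa>" "\<forall>x\<in>car A. shat (\<kappa> x) = h x"
      using UF[OF wfA cA leA conjunct2[OF a]] by blast
    then show "\<exists>\<iota>. emb \<sigma> A U \<iota> \<and> (\<forall>x\<in>car A. h x = shat (\<iota> x))" by auto
  qed
  have hom: "\<forall>A \<iota>. substruct \<sigma> A U \<and> fin_gen \<sigma> A \<and> emb \<sigma> A U \<iota> \<and> (\<forall>x\<in>car A. shat (\<iota> x) = shat x) \<longrightarrow>
        (\<exists>\<alpha>. automorphism \<sigma> U \<alpha> \<and> (\<forall>x\<in>car U. shat (\<alpha> x) = shat x) \<and> (\<forall>x\<in>car A. \<alpha> x = \<iota> x))"
  proof (intro allI impI)
    fix A \<iota> assume a: "substruct \<sigma> A U \<and> fin_gen \<sigma> A \<and> emb \<sigma> A U \<iota> \<and> (\<forall>x\<in>car A. shat (\<iota> x) = shat x)"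
    show "\<exists>\<alpha>. automorphism \<sigma> U \<alpha> \<and> (\<forall>x\<in>car U. shat (\<alpha> x) = shat x) \<and> (\<forall>x\<in>car A. \<alpha> x = \<iota> x)"
      using BF a by blast
  qed
  show ?thesis unfolding uh_retraction_def using ret univ hom by blast
qed

end

theorem proposition4p5:
  fixes \<sigma> :: "('f,'r) signature"
    and C :: "(nat,'f,'r) struct set"
    and U :: "('u,'f,'r) struct"
    and V :: "('v,'f,'r) struct"
    and W :: "('w,'f,'r) struct"
    and r :: "'u \<Rightarrow> 'v" and s :: "'v \<Rightarrow> 'w"
  assumes "fraisse_class \<sigma> C"
    and "fraisse_limit \<sigma> C U"
    and "in_cbar \<sigma> C V"
    and "in_cbar \<sigma> C W"
    and "uh_retraction \<sigma> U V r"
    and "retraction \<sigma> V W s"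
  shows "\<exists>s'. uh_retraction \<sigma> U W s'"
proof -
  obtain j where j: "hom \<sigma> W V j" "\<forall>y\<in>car W. s (j y) = y" and sh: "hom \<sigma> V W s"
    using assms(6) unfolding retraction_def by blast
  have wfU: "wf_struct \<sigma> U" and cU: "countable (car U)" and homoU: "homogeneous \<sigma> U"
    and lim: "\<forall>A\<in>C. \<exists>B. substruct \<sigma> B U \<and> fin_gen \<sigma> B \<and> isomorphic \<sigma> A B"
    using assms(2) unfolding fraisse_limit_def by blast+
  have wfW: "wf_struct \<sigma> W" and cW: "countable (car W)" using assms(4) unfolding in_cbar_def by blast+
  have rh: "hom \<sigma> U V r" using assms(5) unfolding uh_retraction_def retraction_def by blast
  have ru: "\<forall>A :: (nat,'f,'r) struct. \<forall>h. in_cbar \<sigma> (Age \<sigma> U) A \<and> hom \<sigma> A V h \<longrightarrow>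
        (\<exists>\<iota>. emb \<sigma> A U \<iota> \<and> (\<forall>x\<in>car A. h x = r (\<iota> x)))"
    using assms(5) unfolding uh_retraction_def by blast
  have rhg: "\<forall>A \<iota>. substruct \<sigma> A U \<and> fin_gen \<sigma> A \<and> emb \<sigma> A U \<iota> \<and> (\<forall>x\<in>car A. r (\<iota> x) = r x) \<longrightarrow>
        (\<exists>\<alpha>. automorphism \<sigma> U \<alpha> \<and> (\<forall>x\<in>car U. r (\<alpha> x) = r x) \<and> (\<forall>x\<in>car A. \<alpha> x = \<iota> x))"
    using assms(5) unfolding uh_retraction_def by blast
  interpret ctx \<sigma> U V W r s j
    by (unfold_locales) (rule wfU cU homoU wfW cW rh ru rhg sh j(1) j(2))+
  have "uh_retraction \<sigma> U W shat" by (rule shat_uh[OF lim assms(4)])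
  then show ?thesis by blast
qed



end
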